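(* For each $n$, let $P$ be a symmetric $n\times n$ matrix with entries $P_{ij}\in[0,1]$, and assume $P_{ij}=\omega\bigl(\sqrt{\log n/n}\bigr)$ for all $i\neq j$. Let $G=(V,E)$ be a random graph generated from $P$, let $T^*$ be an optimal HC-tree for $G$ (minimizing $\rho_G$), and let $\bar T^*$ be an optimal HC-tree for the expectation graph $\bar G$. Then with high probability $$\rho^*_G=\rho_G(T^* )=(1+o(1))\,\frac{\mathrm{TC}_{\bar G}(\bar T^* )}{\mathbb{E}[\mathrm{BC}(G)]}.$$
   Context: A random graph generated from $P$ on $V=\{v_1,\dots,v_n\}$ contains each edge $(v_i,v_j)$ independently with probability $P_{ij}$, every present edge having weight $1$ (non-edges weight $0$). The expectation graph $\bar G$ is the complete weighted graph on $V$ with $w_{ij}=P_{ij}$. "With high probability" means with probability larger than $1-n^{-\varepsilon}$ for some constant $\varepsilon>0$; asymptotics are as $n\to\infty$. An HC-tree for $V$ is a rooted tree with leaf set $V$. For distinct $i,j,k$: $\{i,j|k\}$ holds in $T$ if $\mathrm{LCA}(v_i,v_j)$ is a proper descendant of $\mathrm{LCA}(v_i,v_j,v_k)$; $\{i|j|k\}$ holds if $\mathrm{LCA}(v_i,v_j)=\mathrm{LCA}(v_j,v_k)=\mathrm{LCA}(v_i,v_j,v_k)$. Triplet cost $c_T(i,j,k)$: $w_{ik}+w_{jk}$ if $\{i,j|k\}$; $w_{ij}+w_{jk}$ if $\{i,k|j\}$; $w_{ij}+w_{ik}$ if $\{j,k|i\}$; $w_{ij}+w_{jk}+w_{ik}$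 if $\{i|j|k\}$. $\mathrm{TC}_G(T)=\sum c_T(i,j,k)$ and $\mathrm{BC}(G)=\sum\min\{w_{ij}+w_{ik},w_{ij}+w_{jk},w_{ik}+w_{jk}\}$ over unordered triples of distinct indices; $\rho_G(T)=\mathrm{TC}_G(T)/\mathrm{BC}(G)$ (with $0/0=1$, $x/0=+\infty$ for $x>0$), $\rho^*_G=\min_T\rho_G(T)$. *)

theory Defs
  imports "HOL-Probability.Probability"
begin

(* Rooted trees whose leaves are labelled by vertex indices (vertex v_i is labelled i). *)
datatype hctree = Leaf nat | Node "hctree list"

fun leaf_list :: "hctree \<Rightarrow> nat list" where
  "leaf_list (Leaf v) = [v]"
| "leaf_list (Node ts) = concat (map leaf_list ts)"

definition leaves :: "hctree \<Rightarrow> nat set" where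
  "leaves t = set (leaf_list t)"

(* every internal node has at least one child, so the leaves of the tree are exactly the Leaf nodes *)
fun wf_tree :: "hctree \<Rightarrow> bool" where
  "wf_tree (Leaf v) = True"
| "wf_tree (Node ts) = (ts \<noteq> [] \<and> (\<forall>t\<in>set ts. wf_tree t))"

fun subtrees :: "hctree \<Rightarrow> hctree set" where
  "subtrees (Leaf v) = {Leaf v}"
| "subtrees (Node ts) = insert (Node ts) (\<Union>t\<in>set ts. subtrees t)"

definition is_hctree :: "nat \<Rightarrow> hctree \<Rightarrow> bool" where
  "is_hctree n T = (wf_tree T \<and> distinct (leaf_list T) \<and> set (leaf_list T) = {..<n})"

(* {i,j|k} holds in T : LCA(i,j) is a proper descendant of LCA(i,j,k), i.e. some subtree
   contains leaves i and j but not k *)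
definition sep :: "hctree \<Rightarrow> nat \<Rightarrow> nat \<Rightarrow> nat \<Rightarrow> bool" where
  "sep T i j k = (\<exists>S\<in>subtrees T. i \<in> leaves S \<and> j \<in> leaves S \<and> k \<notin> leaves S)"

definition trip_cost :: "(nat \<Rightarrow> nat \<Rightarrow> real) \<Rightarrow> hctree \<Rightarrow> nat \<Rightarrow> nat \<Rightarrow> nat \<Rightarrow> real" where
  "trip_cost w T i j k =
     (if sep T i j k then w i k + w j k
      else if sep T i k j then w i j + w j k
      else if sep T j k i then w i j + w i k
      else w i j + w j k + w i k)"

definition TC :: "nat \<Rightarrow> (nat \<Rightarrow> nat \<Rightarrow> real) \<Rightarrow> hctree \<Rightarrow> real" where
  "TC n w T = (\<Sum>k<n. \<Sum>j<k. \<Sum>i<j. trip_cost w T i j k)"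

definition BC :: "nat \<Rightarrow> (nat \<Rightarrow> nat \<Rightarrow> real) \<Rightarrow> real" where
  "BC n w = (\<Sum>k<n. \<Sum>j<k. \<Sum>i<j. min (w i j + w i k) (min (w i j + w j k) (w i k + w j k)))"

definition rho :: "nat \<Rightarrow> (nat \<Rightarrow> nat \<Rightarrow> real) \<Rightarrow> hctree \<Rightarrow> ereal" where
  "rho n w T = (if BC n w = 0 then (if TC n w T = 0 then 1 else \<infinity>) else ereal (TC n w T / BC n w))"

definition rho_star :: "nat \<Rightarrow> (nat \<Rightarrow> nat \<Rightarrow> real) \<Rightarrow> ereal" where
  "rho_star n w = (INF T\<in>{T. is_hctree n T}. rho n w T)"

definition optimal_hctree :: "nat \<Rightarrow> (nat \<Rightarrow> nat \<Rightarrow> real) \<Rightarrow> hctree \<Rightarrow> bool" where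
  "optimal_hctree n w T = (is_hctree n T \<and> (\<forall>T'. is_hctree n T' \<longrightarrow> rho n w T \<le> rho n w T'))"

definition random_graph :: "nat \<Rightarrow> (nat \<Rightarrow> nat \<Rightarrow> real) \<Rightarrow> (nat \<times> nat \<Rightarrow> bool) pmf" where
  "random_graph n P = Pi_pmf {(i,j). i < j \<and> j < n} False (\<lambda>(i,j). bernoulli_pmf (P i j))"

definition graph_weight :: "(nat \<times> nat \<Rightarrow> bool) \<Rightarrow> nat \<Rightarrow> nat \<Rightarrow> real" where
  "graph_weight E i j = (if E (min i j, max i j) then 1 else 0)"

end

theory Submission
  imports Defs
begin

lemma finite_set_Pi_pmf_bool:
  assumes "finite A"
  shows "finite (set_pmf (Pi_pmf A dflt (q :: 'i \<Rightarrow> bool pmf)))"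
proof -
  have "set_pmf (Pi_pmf A dflt q) \<subseteq> PiE_dflt A dflt (set_pmf \<circ> q)"
    by (rule set_Pi_pmf_subset'[OF assms])
  moreover have "finite (PiE_dflt A dflt (set_pmf \<circ> q))"
    using assms by (intro finite_PiE_dflt) auto
  ultimately show ?thesis by (rule finite_subset)
qed

lemma exp_bool_pmf:
  fixes F :: "bool \<Rightarrow> real"
  shows "measure_pmf.expectation q F = pmf q True * F True + pmf q False * F False"
  by (subst integral_measure_pmf[of UNIV]) (auto simp: UNIV_bool)

lemma pmf_bool_sum: "pmf q True + pmf q False = 1"
proof -
  have "sum (pmf q) UNIV = 1" by (rule sum_pmf_eq_1) auto
  thus ?thesis by (simp add: UNIV_bool add.commute)
qed

lemma hoeff_bool:
  fixes F :: "bool \<Rightarrow> real" and q :: "bool pmf"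
  assumes l: "l > 0" and c: "\<bar>F True - F False\<bar> \<le> c"
  shows "measure_pmf.expectation q (\<lambda>y. exp (l * (F y - measure_pmf.expectation q F)))
           \<le> exp (l\<^sup>2 * c\<^sup>2 / 8)"
proof -
  have IB: "interval_bounded_random_variable (measure_pmf q) F (min (F True) (F False)) (max (F True) (F False))"
  proof unfold_locales
    show "AE x in measure_pmf q. F x \<in> {min (F True) (F False)..max (F True) (F False)}"
      by (intro AE_pmfI) (metis (full_types) atLeastAtMost_iff max.cobounded1 max.cobounded2 min.cobounded1 min.cobounded2)
  qed simp
  have 1: "nn_integral (measure_pmf q) (\<lambda>x. exp (l * (F x - measure_pmf.expectation q F))) \<le> ennreal (exp (l\<^sup>2 * (max (F True) (F False) - min (F True) (F False))\<^sup>2 / 8))"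
    using interval_bounded_random_variable.Hoeffdings_lemma_nn_integral[OF IB l] by simp
  have "nn_integral (measure_pmf q) (\<lambda>x. ennreal (exp (l * (F x - measure_pmf.expectation q F)))) = ennreal (measure_pmf.expectation q (\<lambda>x. exp (l * (F x - measure_pmf.expectation q F))))"
    by (rule nn_integral_eq_integral) (auto intro!: integrable_measure_pmf_finite)
  with 1 have 2: "measure_pmf.expectation q (\<lambda>x. exp (l * (F x - measure_pmf.expectation q F))) \<le> exp (l\<^sup>2 * (max (F True) (F False) - min (F True) (F False))\<^sup>2 / 8)"
    by simp
  have "(max (F True) (F False) - min (F True) (F False))\<^sup>2 \<le> c\<^sup>2"
    using c by (intro power_mono) auto
  hence "exp (l\<^sup>2 * (max (F True) (F False) - min (F True) (F False))\<^sup>2 / 8) \<le> exp (l\<^sup>2 * c\<^sup>2 / 8)"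
    using l by (simp add: mult_left_mono divide_right_mono)
  with 2 show ?thesis by linarith
qed

lemma Pi_insert_bind:
  assumes "finite A" "x \<notin> A"
  shows "Pi_pmf (insert x A) dflt q = bind_pmf (q x) (\<lambda>y. map_pmf (\<lambda>g. g(x:=y)) (Pi_pmf A dflt q))"
  using assms by (simp add: Pi_pmf_insert' map_pmf_def)

lemma bind_expectation_bool:
  fixes H :: "'b \<Rightarrow> real"
  assumes "\<And>y. finite (set_pmf (N y))"
  shows "measure_pmf.expectation (bind_pmf q N) H =
     pmf q True * measure_pmf.expectation (N True) H + pmf q False * measure_pmf.expectation (N False) H"
  by (subst pmf_expectation_bind[of UNIV]) (auto simp: assms UNIV_bool)

lemma exp_Pi_insert:
  fixes H :: "('i \<Rightarrow> bool) \<Rightarrow> real"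
  assumes "finite A" "x \<notin> A"
  shows "measure_pmf.expectation (Pi_pmf (insert x A) False q) H =
     pmf (q x) True * measure_pmf.expectation (Pi_pmf A False q) (\<lambda>g. H (g(x:=True)))
   + pmf (q x) False * measure_pmf.expectation (Pi_pmf A False q) (\<lambda>g. H (g(x:=False)))"
  unfolding Pi_insert_bind[OF assms]
  by (subst bind_expectation_bool) (auto intro: finite_set_Pi_pmf_bool assms)

lemma integrable_Pi_bool [simp, intro]:
  fixes H :: "('i \<Rightarrow> bool) \<Rightarrow> real"
  assumes "finite A"
  shows "integrable (measure_pmf (Pi_pmf A dflt q)) H"
  by (intro integrable_measure_pmf_finite finite_set_Pi_pmf_bool assms)

lemma abs_comb_le:
  fixes p1 p0 a b c :: real
  assumes "0 \<le> p1" "0 \<le> p0" "\<bar>a\<bar> \<le> c" "\<bar>b\<bar> \<le> c"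
  shows "\<bar>p1 * a + p0 * b\<bar> \<le> p1 * c + p0 * c"
proof -
  have "\<bar>p1 * a\<bar> \<le> p1 * c" using assms by (simp add: abs_mult mult_left_mono)
  moreover have "\<bar>p0 * b\<bar> \<le> p0 * c" using assms by (simp add: abs_mult mult_left_mono)
  ultimately show ?thesis by (smt (verit) abs_triangle_ineq)
qed

lemma mcd_mgf:
  fixes f :: "('i \<Rightarrow> bool) \<Rightarrow> real" and q :: "'i \<Rightarrow> bool pmf" and c :: "'i \<Rightarrow> real"
  assumes fin: "finite A" and l: "l > 0"
  shows "(\<forall>g z. z \<in> A \<longrightarrow> \<bar>f (g(z:=True)) - f (g(z:=False))\<bar> \<le> c z) \<Longrightarrow>
    measure_pmf.expectation (Pi_pmf A False q)
       (\<lambda>g. exp (l * (f g - measure_pmf.expectation (Pi_pmf A False q) f)))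
    \<le> exp (l\<^sup>2 * (\<Sum>z\<in>A. (c z)\<^sup>2) / 8)"
  using fin
proof (induction A arbitrary: f rule: finite_induct)
  case empty
  then show ?case by simp
next
  case (insert x A f)
  define M where "M = Pi_pmf A False q"
  define p1 where "p1 = pmf (q x) True"
  define p0 where "p0 = pmf (q x) False"
  have p10: "p1 + p0 = 1" unfolding p1_def p0_def by (rule pmf_bool_sum)
  have p1n: "p1 \<ge> 0" "p0 \<ge> 0" unfolding p1_def p0_def by auto
  define h where "h = (\<lambda>g. p1 * f (g(x:=True)) + p0 * f (g(x:=False)))"
  have EM: "measure_pmf.expectation (Pi_pmf (insert x A) False q) H =
     p1 * measure_pmf.expectation M (\<lambda>g. H (g(x:=True))) + p0 * measure_pmf.expectation M (\<lambda>g. H (g(x:=False)))" for H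
    unfolding p1_def p0_def M_def by (rule exp_Pi_insert[OF insert.hyps])
  have mu: "measure_pmf.expectation (Pi_pmf (insert x A) False q) f = measure_pmf.expectation M h"
    unfolding EM h_def M_def using insert.hyps by simp
  define mu where "mu = measure_pmf.expectation M h"
  have muE: "measure_pmf.expectation (Pi_pmf (insert x A) False q) f = mu" using mu mu_def by simp
  have allp: "\<And>g z. z \<in> insert x A \<Longrightarrow> \<bar>f (g(z:=True)) - f (g(z:=False))\<bar> \<le> c z"
    using insert.prems by blast
  have hbd: "\<forall>g z. z \<in> A \<longrightarrow> \<bar>h (g(z:=True)) - h (g(z:=False))\<bar> \<le> c z"
  proof (intro allI impI)
    fix g z assume z: "z \<in> A"
    with insert.hyps have zx: "z \<noteq> x" by auto
    have a: "\<bar>f ((g(x:=b))(z:=True)) - f ((g(x:=b))(z:=False))\<bar> \<le> c z" for b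
      using allp z by simp
    have e: "(g(z:=b'))(x:=b) = (g(x:=b))(z:=b')" for b b'
      using zx by (simp add: fun_upd_twist)
    have "h (g(z:=True)) - h (g(z:=False)) =
        p1 * (f ((g(x:=True))(z:=True)) - f ((g(x:=True))(z:=False))) +
        p0 * (f ((g(x:=False))(z:=True)) - f ((g(x:=False))(z:=False)))"
      unfolding h_def e by (simp only: algebra_simps)
    also have "\<bar>\<dots>\<bar> \<le> p1 * c z + p0 * c z"
      by (rule abs_comb_le[OF p1n a a])
    also have "\<dots> = (p1 + p0) * c z" by (simp add: algebra_simps)
    also have "\<dots> = c z" using p10 by simp
    finally show "\<bar>h (g(z:=True)) - h (g(z:=False))\<bar> \<le> c z" .
  qed
  have IH: "measure_pmf.expectation M (\<lambda>g. exp (l * (h g - mu))) \<le> exp (l\<^sup>2 * (\<Sum>z\<in>A. (c z)\<^sup>2) / 8)"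
    using insert.IH[OF hbd] unfolding M_def mu_def by simp
  have cx: "\<bar>f (g(x:=True)) - f (g(x:=False))\<bar> \<le> c x" for g
    using allp by simp
  have pw: "p1 * exp (l * (f (g(x:=True)) - mu)) + p0 * exp (l * (f (g(x:=False)) - mu))
      \<le> exp (l\<^sup>2 * (c x)\<^sup>2 / 8) * exp (l * (h g - mu))" for g
  proof -
    define F where "F = (\<lambda>b. f (g(x:=b)))"
    have EF: "measure_pmf.expectation (q x) F = h g"
      unfolding exp_bool_pmf F_def h_def p1_def p0_def by simp
    have hb: "measure_pmf.expectation (q x) (\<lambda>y. exp (l * (F y - measure_pmf.expectation (q x) F))) \<le> exp (l\<^sup>2 * (c x)\<^sup>2 / 8)"
      by (rule hoeff_bool[OF l]) (simp add: F_def cx)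
    hence hb': "p1 * exp (l * (F True - h g)) + p0 * exp (l * (F False - h g)) \<le> exp (l\<^sup>2 * (c x)\<^sup>2 / 8)"
      using hb unfolding EF by (simp add: exp_bool_pmf p1_def p0_def)
    have "p1 * exp (l * (f (g(x:=True)) - mu)) + p0 * exp (l * (f (g(x:=False)) - mu))
        = (p1 * exp (l * (F True - h g)) + p0 * exp (l * (F False - h g))) * exp (l * (h g - mu))"
      unfolding F_def by (simp add: algebra_simps flip: exp_add)
    also have "\<dots> \<le> exp (l\<^sup>2 * (c x)\<^sup>2 / 8) * exp (l * (h g - mu))"
      by (rule mult_right_mono[OF hb']) simp
    finally show ?thesis .
  qed
  have "measure_pmf.expectation (Pi_pmf (insert x A) False q)
       (\<lambda>g. exp (l * (f g - measure_pmf.expectation (Pi_pmf (insert x A) False q) f)))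
      = measure_pmf.expectation M (\<lambda>g. p1 * exp (l * (f (g(x:=True)) - mu)) + p0 * exp (l * (f (g(x:=False)) - mu)))"
    apply (subst muE)
    apply (subst EM)
    unfolding M_def using insert.hyps by simp
  also have "\<dots> \<le> measure_pmf.expectation M (\<lambda>g. exp (l\<^sup>2 * (c x)\<^sup>2 / 8) * exp (l * (h g - mu)))"
    unfolding M_def using insert.hyps by (intro integral_mono pw) auto
  also have "\<dots> = exp (l\<^sup>2 * (c x)\<^sup>2 / 8) * measure_pmf.expectation M (\<lambda>g. exp (l * (h g - mu)))"
    by simp
  also have "\<dots> \<le> exp (l\<^sup>2 * (c x)\<^sup>2 / 8) * exp (l\<^sup>2 * (\<Sum>z\<in>A. (c z)\<^sup>2) / 8)"
    by (rule mult_left_mono[OF IH]) simp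
  also have "\<dots> = exp (l\<^sup>2 * (\<Sum>z\<in>insert x A. (c z)\<^sup>2) / 8)"
    using insert.hyps by (simp add: algebra_simps add_divide_distrib flip: exp_add)
  finally show ?case .
qed

lemma mcd_tail:
  fixes f :: "('i \<Rightarrow> bool) \<Rightarrow> real" and q :: "'i \<Rightarrow> bool pmf" and c :: "'i \<Rightarrow> real"
  assumes fin: "finite A"
    and bd: "\<forall>g z. z \<in> A \<longrightarrow> \<bar>f (g(z:=True)) - f (g(z:=False))\<bar> \<le> c z"
    and t: "t > 0" and S: "S > 0" "(\<Sum>z\<in>A. (c z)\<^sup>2) \<le> S"
  shows "measure_pmf.prob (Pi_pmf A False q)
           {g. f g - measure_pmf.expectation (Pi_pmf A False q) f \<ge> t} \<le> exp (-2 * t\<^sup>2 / S)"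
proof -
  define M where "M = Pi_pmf A False q"
  define mu where "mu = measure_pmf.expectation M f"
  define l where "l = 4 * t / S"
  have l: "l > 0" unfolding l_def using t S by simp
  define X where "X = {g. f g - mu \<ge> t}"
  have pw: "indicator X g * exp (l * t) \<le> exp (l * (f g - mu))" for g
  proof (cases "g \<in> X")
    case True
    hence "l * t \<le> l * (f g - mu)" using l unfolding X_def by (simp add: mult_left_mono)
    with True show ?thesis by simp
  qed simp
  have ii: "measure_pmf.expectation M (indicator X) = measure_pmf.prob M X"
    by simp
  have "measure_pmf.prob M X * exp (l * t) = measure_pmf.expectation M (\<lambda>g. indicator X g * exp (l * t))"
    by (subst integral_mult_left_zero) (simp add: ii)
  also have "\<dots> \<le> measure_pmf.expectation M (\<lambda>g. exp (l * (f g - mu)))"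
    unfolding M_def using fin by (intro integral_mono pw) auto
  also have "\<dots> \<le> exp (l\<^sup>2 * (\<Sum>z\<in>A. (c z)\<^sup>2) / 8)"
    unfolding M_def mu_def by (rule mcd_mgf[OF fin l bd])
  also have "\<dots> \<le> exp (l\<^sup>2 * S / 8)"
    using S by (intro exp_mono divide_right_mono mult_left_mono) auto
  finally have 1: "measure_pmf.prob M X * exp (l * t) \<le> exp (l\<^sup>2 * S / 8)" .
  have "measure_pmf.prob M X \<le> exp (l\<^sup>2 * S / 8) / exp (l * t)"
    using 1 by (simp add: pos_le_divide_eq)
  also have "\<dots> = exp (l\<^sup>2 * S / 8 - l * t)" by (simp add: exp_diff)
  also have "l\<^sup>2 * S / 8 - l * t = -2 * t\<^sup>2 / S"
    unfolding l_def using S by (simp add: field_simps power2_eq_square)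
  finally show ?thesis unfolding X_def M_def mu_def .
qed

lemma mcd_tail_lower:
  fixes f :: "('i \<Rightarrow> bool) \<Rightarrow> real" and q :: "'i \<Rightarrow> bool pmf" and c :: "'i \<Rightarrow> real"
  assumes fin: "finite A"
    and bd: "\<forall>g z. z \<in> A \<longrightarrow> \<bar>f (g(z:=True)) - f (g(z:=False))\<bar> \<le> c z"
    and t: "t > 0" and S: "S > 0" "(\<Sum>z\<in>A. (c z)\<^sup>2) \<le> S"
  shows "measure_pmf.prob (Pi_pmf A False q)
           {g. measure_pmf.expectation (Pi_pmf A False q) f - f g \<ge> t} \<le> exp (-2 * t\<^sup>2 / S)"
proof -
  have bd': "\<forall>g z. z \<in> A \<longrightarrow> \<bar>(\<lambda>g. - f g) (g(z:=True)) - (\<lambda>g. - f g) (g(z:=False))\<bar> \<le> c z"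
  proof (intro allI impI)
    fix g z assume "z \<in> A"
    hence "\<bar>f (g(z:=True)) - f (g(z:=False))\<bar> \<le> c z" using bd by blast
    moreover have "(\<lambda>g. - f g) (g(z:=True)) - (\<lambda>g. - f g) (g(z:=False)) = - (f (g(z:=True)) - f (g(z:=False)))" by simp
    ultimately show "\<bar>(\<lambda>g. - f g) (g(z:=True)) - (\<lambda>g. - f g) (g(z:=False))\<bar> \<le> c z" by (simp only: abs_minus_cancel)
  qed
  have "measure_pmf.prob (Pi_pmf A False q)
           {g. (\<lambda>g. - f g) g - measure_pmf.expectation (Pi_pmf A False q) (\<lambda>g. - f g) \<ge> t} \<le> exp (-2 * t\<^sup>2 / S)"
    by (rule mcd_tail[OF fin bd' t S])
  thus ?thesis by simp
qed

definition Aset :: "nat \<Rightarrow> (nat \<times> nat) set" where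
  "Aset n = {(i,j). i < j \<and> j < n}"

lemma Aset_sub: "Aset n \<subseteq> {..<n} \<times> {..<n}"
  unfolding Aset_def by auto

lemma finite_Aset [simp, intro]: "finite (Aset n)"
  using Aset_sub by (rule finite_subset) auto

lemma card_Aset: "real (card (Aset n)) \<le> real n ^ 2"
proof -
  have "card (Aset n) \<le> card ({..<n} \<times> {..<n})"
    by (rule card_mono[OF _ Aset_sub]) auto
  thus ?thesis by (simp add: power2_eq_square flip: of_nat_mult)
qed

lemma rg_def: "random_graph n P = Pi_pmf (Aset n) False (\<lambda>(i,j). bernoulli_pmf (P i j))"
  unfolding random_graph_def Aset_def ..

lemma sum_pairs:
  fixes F :: "nat \<Rightarrow> nat \<Rightarrow> real"
  shows "(\<Sum>v<n. \<Sum>u<v. F u v) = (\<Sum>z\<in>Aset n. F (fst z) (snd z))"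
proof -
  have "(\<Sum>v<n. \<Sum>u<v. F u v) = (\<Sum>(v,u)\<in>Sigma {..<n} (\<lambda>v. {..<v}). F u v)"
    by (rule sum.Sigma) auto
  also have "\<dots> = (\<Sum>z\<in>Aset n. F (fst z) (snd z))"
    by (rule sum.reindex_bij_witness[where i = "\<lambda>(u,v). (v,u)" and j = "\<lambda>(v,u). (u,v)"])
       (auto simp: Aset_def)
  finally show ?thesis .
qed

lemma gw_Aset: "z \<in> Aset n \<Longrightarrow> graph_weight E (fst z) (snd z) = (if E z then 1 else 0)"
  unfolding Aset_def graph_weight_def by (cases z) auto

lemma lin_bd:
  fixes a :: "'i \<Rightarrow> real"
  assumes "finite A"
  shows "\<forall>g z. z \<in> A \<longrightarrow> \<bar>(\<Sum>y\<in>A. a y * (if (g(z:=True)) y then 1 else 0)) - (\<Sum>y\<in>A. a y * (if (g(z:=False)) y then 1 else 0))\<bar> \<le> \<bar>a z\<bar>"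
proof (intro allI impI)
  fix g z assume z: "z \<in> A"
  have "(\<Sum>y\<in>A. a y * (if (g(z:=True)) y then 1 else 0)) - (\<Sum>y\<in>A. a y * (if (g(z:=False)) y then 1 else 0))
      = (\<Sum>y\<in>A. a y * (if (g(z:=True)) y then 1 else 0) - a y * (if (g(z:=False)) y then 1 else 0))"
    by (simp add: sum_subtractf)
  also have "\<dots> = (\<Sum>y\<in>A. if y = z then a z else 0)"
    by (rule sum.cong) auto
  also have "\<dots> = a z" using z assms by simp
  finally show "\<bar>(\<Sum>y\<in>A. a y * (if (g(z:=True)) y then 1 else 0)) - (\<Sum>y\<in>A. a y * (if (g(z:=False)) y then 1 else 0))\<bar> \<le> \<bar>a z\<bar>"
    by simp
qed

lemma exp_coord:
  assumes "z \<in> Aset n" and P: "0 \<le> P (fst z) (snd z)" "P (fst z) (snd z) \<le> 1"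
  shows "measure_pmf.expectation (random_graph n P) (\<lambda>E. if E z then 1 else 0) = P (fst z) (snd z)"
proof -
  have "measure_pmf.expectation (random_graph n P) (\<lambda>E. if E z then 1 else 0)
      = measure_pmf.expectation (map_pmf (\<lambda>E. E z) (random_graph n P)) (\<lambda>b. if b then 1 else (0::real))"
    by (simp only: integral_map_pmf)
  also have "map_pmf (\<lambda>E. E z) (random_graph n P) = bernoulli_pmf (P (fst z) (snd z))"
    unfolding rg_def using assms by (subst Pi_pmf_component) (auto simp: case_prod_beta)
  finally show ?thesis using P by simp
qed

lemma exp_coord2:
  assumes z1: "z1 \<in> Aset n" and z2: "z2 \<in> Aset n" and ne: "z1 \<noteq> z2"
    and P: "\<And>i j. i < n \<Longrightarrow> j < n \<Longrightarrow> 0 \<le> P i j \<and> P i j \<le> 1"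
  shows "measure_pmf.expectation (random_graph n P) (\<lambda>E. (if E z1 then 1 else 0) * (if E z2 then 1 else 0))
      = P (fst z1) (snd z1) * P (fst z2) (snd z2)"
proof -
  define f where "f = (\<lambda>z (b::bool). if z = z1 \<or> z = z2 then (if b then 1 else 0) else (1::real))"
  have 1: "(\<Prod>z\<in>Aset n. f z (E z)) = (if E z1 then 1 else 0) * (if E z2 then 1 else 0)" for E
  proof -
    have "(\<Prod>z\<in>Aset n. f z (E z)) = (\<Prod>z\<in>{z1,z2}. f z (E z))"
      using z1 z2 by (intro prod.mono_neutral_right) (auto simp: f_def)
    thus ?thesis using ne by (simp add: f_def)
  qed
  have 2: "measure_pmf.expectation (bernoulli_pmf (P (fst z) (snd z))) (f z) = (if z = z1 \<or> z = z2 then P (fst z) (snd z) else 1)" if z: "z \<in> Aset n" for z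
  proof -
    have "fst z < n" "snd z < n" using z unfolding Aset_def by auto
    thus ?thesis using P[of "fst z" "snd z"] by (simp add: f_def)
  qed
  have "measure_pmf.expectation (random_graph n P) (\<lambda>E. \<Prod>z\<in>Aset n. f z (E z))
      = (\<Prod>z\<in>Aset n. measure_pmf.expectation ((\<lambda>(i,j). bernoulli_pmf (P i j)) z) (f z))"
    unfolding rg_def by (rule expectation_prod_Pi_pmf) (auto simp: f_def intro!: integrable_measure_pmf_finite)
  also have "\<dots> = (\<Prod>z\<in>Aset n. if z = z1 \<or> z = z2 then P (fst z) (snd z) else 1)"
    by (intro prod.cong refl) (simp add: case_prod_beta 2)
  also have "\<dots> = (\<Prod>z\<in>{z1,z2}. if z = z1 \<or> z = z2 then P (fst z) (snd z) else 1)"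
    using z1 z2 by (intro prod.mono_neutral_right) auto
  also have "\<dots> = P (fst z1) (snd z1) * P (fst z2) (snd z2)" using ne by simp
  finally show ?thesis unfolding 1 .
qed

lemma leaves_Leaf [simp]: "leaves (Leaf v) = {v}" by (simp add: leaves_def)
lemma leaves_Node [simp]: "leaves (Node ts) = (\<Union>t\<in>set ts. leaves t)" by (simp add: leaves_def)

lemma subtree_leaves: "S \<in> subtrees T \<Longrightarrow> leaves S \<subseteq> leaves T"
proof (induction T arbitrary: S)
  case (Leaf x) thus ?case by simp
next
  case (Node ts) thus ?case by auto
qed

lemma leaf_in_subtrees: "u \<in> leaves T \<Longrightarrow> Leaf u \<in> subtrees T"
proof (induction T)
  case (Leaf x) thus ?case by simp
next
  case (Node ts) thus ?case by auto
qed

lemma distinct_concat_nth: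
  "distinct (concat xss) \<Longrightarrow> a < length xss \<Longrightarrow> b < length xss \<Longrightarrow> a \<noteq> b \<Longrightarrow> set (xss!a) \<inter> set (xss!b) = {}"
proof (induction xss arbitrary: a b)
  case Nil thus ?case by simp
next
  case (Cons xs xss)
  show ?case
  proof (cases a)
    case 0
    then obtain b' where b: "b = Suc b'" using Cons by (cases b) auto
    have "set (xss ! b') \<subseteq> set (concat xss)" using Cons b by auto
    thus ?thesis using Cons.prems 0 b by auto
  next
    case (Suc a')
    show ?thesis
    proof (cases b)
      case 0
      have "set (xss ! a') \<subseteq> set (concat xss)" using Cons Suc by auto
      thus ?thesis using Cons.prems 0 Suc by auto
    next
      case (Suc b')
      thus ?thesis using Cons \<open>a = Suc a'\<close> by auto
    qed
  qed
qed

lemma laminar: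
  "distinct (leaf_list T) \<Longrightarrow> S1 \<in> subtrees T \<Longrightarrow> S2 \<in> subtrees T \<Longrightarrow>
     leaves S1 \<subseteq> leaves S2 \<or> leaves S2 \<subseteq> leaves S1 \<or> leaves S1 \<inter> leaves S2 = {}"
proof (induction T arbitrary: S1 S2)
  case (Leaf x) thus ?case by simp
next
  case (Node ts)
  show ?case
  proof (cases "S1 = Node ts \<or> S2 = Node ts")
    case True
    thus ?thesis using subtree_leaves[OF Node.prems(2)] subtree_leaves[OF Node.prems(3)] by auto
  next
    case False
    then obtain t1 t2 where t1: "t1 \<in> set ts" "S1 \<in> subtrees t1" and t2: "t2 \<in> set ts" "S2 \<in> subtrees t2"
      using Node.prems by auto
    obtain a where a: "a < length ts" "ts ! a = t1" using t1 by (meson in_set_conv_nth)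
    obtain b where b: "b < length ts" "ts ! b = t2" using t2 by (meson in_set_conv_nth)
    have dc: "distinct (concat (map leaf_list ts))" using Node.prems by simp
    show ?thesis
    proof (cases "a = b")
      case True
      hence "t1 = t2" using a b by simp
      moreover have "distinct (leaf_list t1)" using dc t1 by (simp add: distinct_concat_iff)
      ultimately show ?thesis using Node.IH[OF t1(1)] t1 t2 by blast
    next
      case False
      have "set (map leaf_list ts ! a) \<inter> set (map leaf_list ts ! b) = {}"
        using distinct_concat_nth[OF dc, of a b] a b False by simp
      hence "leaves t1 \<inter> leaves t2 = {}" using a b by (simp add: leaves_def)
      thus ?thesis using subtree_leaves[OF t1(2)] subtree_leaves[OF t2(2)] by blast
    qed
  qed
qed

lemma sep_sym: "sep T u v m = sep T v u m"
  unfolding sep_def by blast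

lemma sep_trans:
  assumes d: "distinct (leaf_list T)" and 1: "sep T u v m" and 2: "sep T v w m"
  shows "sep T u w m"
proof -
  obtain S1 where S1: "S1 \<in> subtrees T" "u \<in> leaves S1" "v \<in> leaves S1" "m \<notin> leaves S1"
    using 1 unfolding sep_def by blast
  obtain S2 where S2: "S2 \<in> subtrees T" "v \<in> leaves S2" "w \<in> leaves S2" "m \<notin> leaves S2"
    using 2 unfolding sep_def by blast
  from laminar[OF d S1(1) S2(1)] S1 S2 show ?thesis
    unfolding sep_def by blast
qed

lemma sep_refl: "u \<in> leaves T \<Longrightarrow> u \<noteq> m \<Longrightarrow> sep T u u m"
proof -
  assume "u \<in> leaves T" "u \<noteq> m"
  thus ?thesis unfolding sep_def by (intro bexI[OF _ leaf_in_subtrees]) auto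
qed

lemma sep_excl:
  assumes d: "distinct (leaf_list T)" and 1: "sep T a b c" and 2: "sep T a c b"
  shows False
proof -
  obtain S1 where S1: "S1 \<in> subtrees T" "a \<in> leaves S1" "b \<in> leaves S1" "c \<notin> leaves S1"
    using 1 unfolding sep_def by blast
  obtain S2 where S2: "S2 \<in> subtrees T" "a \<in> leaves S2" "c \<in> leaves S2" "b \<notin> leaves S2"
    using 2 unfolding sep_def by blast
  from laminar[OF d S1(1) S2(1)] S1 S2 show False by blast
qed

definition aind :: "hctree \<Rightarrow> nat \<Rightarrow> nat \<Rightarrow> nat \<Rightarrow> real" where
  "aind T u v m = (if sep T u v m then 0 else 1)"

lemma trip_cost_decomp:
  assumes d: "distinct (leaf_list T)"
  shows "trip_cost w T i j k = w i j * aind T i j k + w i k * aind T i k j + w j k * aind T j k i"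
proof -
  have e1: "\<not> (sep T i j k \<and> sep T i k j)" using sep_excl[OF d] by blast
  have e2: "\<not> (sep T i j k \<and> sep T j k i)" using sep_excl[OF d, of j i k] sep_sym by blast
  have e3: "\<not> (sep T i k j \<and> sep T j k i)" using sep_excl[OF d, of k i j] sep_sym by blast
  show ?thesis unfolding trip_cost_def aind_def using e1 e2 e3 by auto
qed

definition lab :: "hctree \<Rightarrow> nat \<Rightarrow> nat \<Rightarrow> nat \<Rightarrow> nat" where
  "lab T n m = (\<lambda>u\<in>{..<n}. if u = m then 0 else LEAST x. sep T u x m)"

lemma hctree_leaves: "is_hctree n T \<Longrightarrow> leaves T = {..<n}"
  unfolding is_hctree_def leaves_def by simp

lemma hctree_distinct: "is_hctree n T \<Longrightarrow> distinct (leaf_list T)"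
  unfolding is_hctree_def by simp

lemma lab_PiE:
  assumes h: "is_hctree n T"
  shows "lab T n m \<in> {..<n} \<rightarrow>\<^sub>E {..<n}"
proof -
  have "(LEAST x. sep T u x m) < n" if u: "u < n" "u \<noteq> m" for u
  proof -
    have "sep T u u m" using sep_refl[of u T m] hctree_leaves[OF h] u by auto
    hence "(LEAST x. sep T u x m) \<le> u" by (rule Least_le)
    thus ?thesis using u by simp
  qed
  thus ?thesis unfolding lab_def by auto
qed

lemma lab_iff:
  assumes h: "is_hctree n T" and u: "u < n" "u \<noteq> m" and v: "v < n" "v \<noteq> m"
  shows "sep T u v m \<longleftrightarrow> lab T n m u = lab T n m v"
proof -
  have d: "distinct (leaf_list T)" by (rule hctree_distinct[OF h])
  have su: "sep T u (LEAST x. sep T u x m) m"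
    by (rule LeastI[of _ u]) (use sep_refl[of u T m] hctree_leaves[OF h] u in auto)
  have sv: "sep T v (LEAST x. sep T v x m) m"
    by (rule LeastI[of _ v]) (use sep_refl[of v T m] hctree_leaves[OF h] v in auto)
  have "sep T u v m \<longleftrightarrow> (LEAST x. sep T u x m) = (LEAST x. sep T v x m)"
  proof
    assume uv: "sep T u v m"
    have "sep T u x m \<longleftrightarrow> sep T v x m" for x
      using sep_trans[OF d] sep_sym uv by metis
    thus "(LEAST x. sep T u x m) = (LEAST x. sep T v x m)" by simp
  next
    assume eq: "(LEAST x. sep T u x m) = (LEAST x. sep T v x m)"
    show "sep T u v m"
      using su sv eq sep_trans[OF d] sep_sym by metis
  qed
  thus ?thesis unfolding lab_def using u v by simp
qed

lemma regroup2:
  fixes G :: "nat \<Rightarrow> nat \<Rightarrow> real"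
  shows "(\<Sum>m<n. \<Sum>u<n. if u \<noteq> m then G u m else 0) = (\<Sum>j<n. \<Sum>i<j. G i j + G j i)"
proof (induction n)
  case 0 thus ?case by simp
next
  case (Suc n)
  have "(\<Sum>m<Suc n. \<Sum>u<Suc n. if u \<noteq> m then G u m else 0)
      = (\<Sum>m<n. (\<Sum>u<n. if u \<noteq> m then G u m else 0) + G n m) + (\<Sum>u<n. G u n)"
    by (simp add: sum.distrib)
  also have "\<dots> = (\<Sum>m<n. \<Sum>u<n. if u \<noteq> m then G u m else 0) + (\<Sum>i<n. G i n + G n i)"
    by (simp add: sum.distrib)
  also have "\<dots> = (\<Sum>j<Suc n. \<Sum>i<j. G i j + G j i)"
    using Suc.IH by simp
  finally show ?case .
qed

lemma regroup3:
  fixes F :: "nat \<Rightarrow> nat \<Rightarrow> nat \<Rightarrow> real"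
  shows "(\<Sum>k<n. \<Sum>j<k. \<Sum>i<j. F i j k + F i k j + F j k i)
       = (\<Sum>m<n. \<Sum>v<n. \<Sum>u<v. if u \<noteq> m \<and> v \<noteq> m then F u v m else 0)"
proof (induction n)
  case 0 thus ?case by simp
next
  case (Suc n)
  have a: "(\<Sum>v<Suc n. \<Sum>u<v. if u \<noteq> m \<and> v \<noteq> m then F u v m else 0)
      = (\<Sum>v<n. \<Sum>u<v. if u \<noteq> m \<and> v \<noteq> m then F u v m else 0) + (\<Sum>u<n. if u \<noteq> m then F u n m else 0)"
    if "m < n" for m
    using that by (simp add: sum.distrib)
  have b: "(\<Sum>v<Suc n. \<Sum>u<v. if u \<noteq> n \<and> v \<noteq> n then F u v n else 0) = (\<Sum>v<n. \<Sum>u<v. F u v n)"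
    by simp
  have "(\<Sum>m<Suc n. \<Sum>v<Suc n. \<Sum>u<v. if u \<noteq> m \<and> v \<noteq> m then F u v m else 0)
     = (\<Sum>m<n. \<Sum>v<Suc n. \<Sum>u<v. if u \<noteq> m \<and> v \<noteq> m then F u v m else 0) + (\<Sum>v<n. \<Sum>u<v. F u v n)"
    using sum.lessThan_Suc[where g = "\<lambda>m. \<Sum>v<Suc n. \<Sum>u<v. if u \<noteq> m \<and> v \<noteq> m then F u v m else 0" and n = n] b
    by simp
  also have "(\<Sum>m<n. \<Sum>v<Suc n. \<Sum>u<v. if u \<noteq> m \<and> v \<noteq> m then F u v m else 0)
     = (\<Sum>m<n. (\<Sum>v<n. \<Sum>u<v. if u \<noteq> m \<and> v \<noteq> m then F u v m else 0) + (\<Sum>u<n. if u \<noteq> m then F u n m else 0))"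
    by (rule sum.cong) (auto simp: a)
  also have "\<dots> = (\<Sum>m<n. \<Sum>v<n. \<Sum>u<v. if u \<noteq> m \<and> v \<noteq> m then F u v m else 0) + (\<Sum>j<n. \<Sum>i<j. F i n j + F j n i)"
    by (simp add: sum.distrib regroup2[of "\<lambda>u m. F u n m"])
  finally show ?case using Suc.IH by (simp add: sum.distrib algebra_simps)
qed

definition Yw :: "nat \<Rightarrow> nat \<Rightarrow> (nat \<Rightarrow> nat) \<Rightarrow> (nat \<Rightarrow> nat \<Rightarrow> real) \<Rightarrow> real" where
  "Yw n m g w = (\<Sum>v<n. \<Sum>u<v. if u \<noteq> m \<and> v \<noteq> m \<and> g u \<noteq> g v then w u v else 0)"

lemma TC_decomp:
  assumes h: "is_hctree n T"
  shows "TC n w T = (\<Sum>m<n. Yw n m (lab T n m) w)"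
proof -
  have d: "distinct (leaf_list T)" by (rule hctree_distinct[OF h])
  define F where "F = (\<lambda>u v m. w u v * aind T u v m)"
  have "TC n w T = (\<Sum>k<n. \<Sum>j<k. \<Sum>i<j. F i j k + F i k j + F j k i)"
    unfolding TC_def F_def trip_cost_decomp[OF d] ..
  also have "\<dots> = (\<Sum>m<n. \<Sum>v<n. \<Sum>u<v. if u \<noteq> m \<and> v \<noteq> m then F u v m else 0)"
    by (rule regroup3)
  also have "\<dots> = (\<Sum>m<n. Yw n m (lab T n m) w)"
    unfolding Yw_def
  proof (intro sum.cong refl)
    fix m v u assume m: "m \<in> {..<n}" and v: "v \<in> {..<n}" and u: "u \<in> {..<v}"
    show "(if u \<noteq> m \<and> v \<noteq> m then F u v m else 0) =
          (if u \<noteq> m \<and> v \<noteq> m \<and> lab T n m u \<noteq> lab T n m v then w u v else 0)"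
    proof (cases "u \<noteq> m \<and> v \<noteq> m")
      case True
      have "sep T u v m \<longleftrightarrow> lab T n m u = lab T n m v"
        by (rule lab_iff[OF h]) (use True u v in auto)
      thus ?thesis using True unfolding F_def aind_def by auto
    qed auto
  qed
  finally show ?thesis .
qed

lemma N3:
  "(\<Sum>k<n. \<Sum>j<k. \<Sum>i<(j::nat). (1::real)) = real n * (real n - 1) * (real n - 2) / 6"
proof -
  have s2: "(\<Sum>j<k. real j) = real k * (real k - 1) / 2" for k
    by (induction k) (auto simp: field_simps)
  have "(\<Sum>k<n. \<Sum>j<k. \<Sum>i<(j::nat). (1::real)) = (\<Sum>k<n. real k * (real k - 1) / 2)"
    by (simp add: s2)
  also have "\<dots> = real n * (real n - 1) * (real n - 2) / 6"
    by (induction n) (auto simp: field_simps)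
  finally show ?thesis .
qed

lemma trip_lower:
  assumes "0 \<le> w i j" "0 \<le> w i k" "0 \<le> w j k" "pm \<le> w i j" "pm \<le> w i k" "pm \<le> w j k"
  shows "2 * pm \<le> trip_cost w T i j k"
  using assms unfolding trip_cost_def by auto

lemma TC_lower:
  assumes w: "\<And>i j. i < n \<Longrightarrow> j < n \<Longrightarrow> i \<noteq> j \<Longrightarrow> 0 \<le> w i j \<and> pm \<le> w i j"
  shows "2 * pm * (real n * (real n - 1) * (real n - 2) / 6) \<le> TC n w T"
proof -
  have "2 * pm * (real n * (real n - 1) * (real n - 2) / 6) = (\<Sum>k<n. \<Sum>j<k. \<Sum>i<j. 2 * pm)"
    by (simp only: N3[symmetric] sum_distrib_left mult_1_right)
  also have "\<dots> \<le> TC n w T"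
    unfolding TC_def
    by (intro sum_mono trip_lower) (use w in auto)
  finally show ?thesis .
qed

lemma BC_lower:
  assumes w: "\<And>i j. i < n \<Longrightarrow> j < n \<Longrightarrow> i \<noteq> j \<Longrightarrow> 0 \<le> w i j \<and> pm \<le> w i j"
  shows "2 * pm * (real n * (real n - 1) * (real n - 2) / 6) \<le> BC n w"
proof -
  have "2 * pm * (real n * (real n - 1) * (real n - 2) / 6) = (\<Sum>k<n. \<Sum>j<k. \<Sum>i<j. 2 * pm)"
    by (simp only: N3[symmetric] sum_distrib_left mult_1_right)
  also have "\<dots> \<le> BC n w"
    unfolding BC_def
  proof (intro sum_mono)
    fix k j i assume "k \<in> {..<n}" "j \<in> {..<k}" "i \<in> {..<j}"
    hence "0 \<le> w i j \<and> pm \<le> w i j" "0 \<le> w i k \<and> pm \<le> w i k" "0 \<le> w j k \<and> pm \<le> w j k"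
      using w by auto
    thus "2 * pm \<le> min (w i j + w i k) (min (w i j + w j k) (w i k + w j k))" by auto
  qed
  finally show ?thesis .
qed

definition ya :: "nat \<Rightarrow> (nat \<Rightarrow> nat) \<Rightarrow> nat \<times> nat \<Rightarrow> real" where
  "ya m g z = (if fst z \<noteq> m \<and> snd z \<noteq> m \<and> g (fst z) \<noteq> g (snd z) then 1 else 0)"

lemma Yw_lin: "Yw n m g w = (\<Sum>z\<in>Aset n. ya m g z * w (fst z) (snd z))"
  unfolding Yw_def sum_pairs ya_def by (intro sum.cong refl) auto

lemma Yw_gw: "Yw n m g (graph_weight E) = (\<Sum>z\<in>Aset n. ya m g z * (if E z then 1 else 0))"
  unfolding Yw_lin by (intro sum.cong refl) (simp add: gw_Aset)

lemma Yw_exp: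
  assumes P: "\<And>i j. i < n \<Longrightarrow> j < n \<Longrightarrow> 0 \<le> P i j \<and> P i j \<le> 1"
  shows "measure_pmf.expectation (random_graph n P) (\<lambda>E. Yw n m g (graph_weight E)) = Yw n m g P"
proof -
  have "measure_pmf.expectation (random_graph n P) (\<lambda>E. Yw n m g (graph_weight E))
      = (\<Sum>z\<in>Aset n. ya m g z * measure_pmf.expectation (random_graph n P) (\<lambda>E. if E z then 1 else 0))"
    unfolding Yw_gw rg_def
    by (subst Bochner_Integration.integral_sum) auto
  also have "\<dots> = (\<Sum>z\<in>Aset n. ya m g z * P (fst z) (snd z))"
  proof (intro sum.cong refl)
    fix z assume z: "z \<in> Aset n"
    hence "fst z < n" "snd z < n" unfolding Aset_def by auto
    thus "ya m g z * measure_pmf.expectation (random_graph n P) (\<lambda>E. if E z then 1 else 0) = ya m g z * P (fst z) (snd z)"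
      using exp_coord[OF z] P by simp
  qed
  finally show ?thesis unfolding Yw_lin .
qed

lemma Yw_tail:
  assumes P: "\<And>i j. i < n \<Longrightarrow> j < n \<Longrightarrow> 0 \<le> P i j \<and> P i j \<le> 1"
    and t: "t > 0" and n: "n > 0"
  shows "measure_pmf.prob (random_graph n P) {E. \<bar>Yw n m g (graph_weight E) - Yw n m g P\<bar> \<ge> t}
     \<le> 2 * exp (-2 * t\<^sup>2 / (real n)\<^sup>2)"
proof -
  define M where "M = random_graph n P"
  define f where "f = (\<lambda>E. Yw n m g (graph_weight E))"
  have Ef: "measure_pmf.expectation M f = Yw n m g P" unfolding M_def f_def by (rule Yw_exp[OF P])
  have feq: "f = (\<lambda>E. \<Sum>z\<in>Aset n. ya m g z * (if E z then 1 else 0))" unfolding f_def Yw_gw ..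
  have bd: "\<forall>E z. z \<in> Aset n \<longrightarrow> \<bar>f (E(z:=True)) - f (E(z:=False))\<bar> \<le> \<bar>ya m g z\<bar>"
    unfolding feq by (rule lin_bd) simp
  have S: "(\<Sum>z\<in>Aset n. \<bar>ya m g z\<bar>\<^sup>2) \<le> (real n)\<^sup>2"
  proof -
    have "(\<Sum>z\<in>Aset n. \<bar>ya m g z\<bar>\<^sup>2) \<le> (\<Sum>z\<in>Aset n. 1)"
      by (intro sum_mono) (simp add: ya_def)
    also have "\<dots> \<le> (real n)\<^sup>2" using card_Aset by simp
    finally show ?thesis .
  qed
  have Sp: "(real n)\<^sup>2 > 0" using n by simp
  have up: "measure_pmf.prob M {E. f E - measure_pmf.expectation M f \<ge> t} \<le> exp (-2 * t\<^sup>2 / (real n)\<^sup>2)"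
    unfolding M_def rg_def by (rule mcd_tail[OF finite_Aset bd[unfolded M_def] t Sp S])
  have lo: "measure_pmf.prob M {E. measure_pmf.expectation M f - f E \<ge> t} \<le> exp (-2 * t\<^sup>2 / (real n)\<^sup>2)"
    unfolding M_def rg_def by (rule mcd_tail_lower[OF finite_Aset bd t Sp S])
  have "{E. \<bar>Yw n m g (graph_weight E) - Yw n m g P\<bar> \<ge> t} =
      {E. f E - measure_pmf.expectation M f \<ge> t} \<union> {E. measure_pmf.expectation M f - f E \<ge> t}"
    unfolding Ef by (auto simp: f_def)
  hence "measure_pmf.prob M {E. \<bar>Yw n m g (graph_weight E) - Yw n m g P\<bar> \<ge> t}
      \<le> measure_pmf.prob M {E. f E - measure_pmf.expectation M f \<ge> t} + measure_pmf.prob M {E. measure_pmf.expectation M f - f E \<ge> t}"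
    by (simp only:) (intro measure_Un_le, auto)
  also have "\<dots> \<le> 2 * exp (-2 * t\<^sup>2 / (real n)\<^sup>2)" using up lo by simp
  finally show ?thesis unfolding M_def .
qed

lemma delta_le1: "finite X \<Longrightarrow> (\<Sum>x\<in>X. if x = c then (1::real) else 0) \<le> 1"
  by (simp add: sum.delta)

lemma min3_lip:
  fixes x1 x2 x3 y1 y2 y3 :: real
  shows "\<bar>min (x1 + x2) (min (x1 + x3) (x2 + x3)) - min (y1 + y2) (min (y1 + y3) (y2 + y3))\<bar>
     \<le> \<bar>x1 - y1\<bar> + \<bar>x2 - y2\<bar> + \<bar>x3 - y3\<bar>"
proof -
  have l: "\<bar>min p q - min p' q'\<bar> \<le> max \<bar>p - p'\<bar> \<bar>q - q'\<bar>" for p q p' q' :: real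
    by (simp add: min_def max_def abs_if) 
  have "\<bar>min (x1 + x3) (x2 + x3) - min (y1 + y3) (y2 + y3)\<bar> \<le> \<bar>x1 - y1\<bar> + \<bar>x2 - y2\<bar> + \<bar>x3 - y3\<bar>"
    using l[of "x1 + x3" "x2 + x3" "y1 + y3" "y2 + y3"] by (smt (verit))
  thus ?thesis
    using l[of "x1 + x2" "min (x1 + x3) (x2 + x3)" "y1 + y2" "min (y1 + y3) (y2 + y3)"] by (smt (verit))
qed

definition Ind :: "nat \<Rightarrow> nat \<Rightarrow> nat \<Rightarrow> nat \<Rightarrow> real" where
  "Ind a b u v = (if u = a \<and> v = b then 1 else 0)"

lemma Ind_nonneg [simp]: "0 \<le> Ind a b u v" by (simp add: Ind_def)

lemma C1: "(\<Sum>k<n. \<Sum>j<k. \<Sum>i<j. Ind a b i j) \<le> real n"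
proof -
  have "(\<Sum>j<k. \<Sum>i<j. Ind a b i j) \<le> 1" for k
  proof -
    have "(\<Sum>j<k. \<Sum>i<j. Ind a b i j) \<le> (\<Sum>j<k. if j = b then 1 else 0)"
    proof (intro sum_mono)
      fix j
      show "(\<Sum>i<j. Ind a b i j) \<le> (if j = b then 1 else 0)"
        using delta_le1[of "{..<j}" a] by (auto simp: Ind_def)
    qed
    also have "\<dots> \<le> 1" by (rule delta_le1) simp
    finally show ?thesis .
  qed
  hence "(\<Sum>k<n. \<Sum>j<k. \<Sum>i<j. Ind a b i j) \<le> (\<Sum>k<n. 1)" by (intro sum_mono) auto
  thus ?thesis by simp
qed

lemma C2: "(\<Sum>k<n. \<Sum>j<k. \<Sum>i<j. Ind a b i k) \<le> real n"
proof -
  have "(\<Sum>j<k. \<Sum>i<j. Ind a b i k) \<le> real n * (if k = b then 1 else 0)" if k: "k < n" for k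
  proof -
    have "(\<Sum>j<k. \<Sum>i<j. Ind a b i k) \<le> (\<Sum>j<k. if k = b then 1 else 0)"
    proof (intro sum_mono)
      fix j
      show "(\<Sum>i<j. Ind a b i k) \<le> (if k = b then 1 else 0)"
        using delta_le1[of "{..<j}" a] by (auto simp: Ind_def)
    qed
    also have "\<dots> = real k * (if k = b then 1 else 0)" by simp
    also have "\<dots> \<le> real n * (if k = b then 1 else 0)" using k by simp
    finally show ?thesis .
  qed
  hence "(\<Sum>k<n. \<Sum>j<k. \<Sum>i<j. Ind a b i k) \<le> (\<Sum>k<n. real n * (if k = b then 1 else 0))"
    by (intro sum_mono) auto
  also have "\<dots> = real n * (\<Sum>k<n. if k = b then 1 else 0)" by (rule sum_distrib_left[symmetric])
  also have "\<dots> \<le> real n * 1" by (intro mult_left_mono delta_le1) auto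
  finally show ?thesis by simp
qed

lemma C3: "(\<Sum>k<n. \<Sum>j<k. \<Sum>i<j. Ind a b j k) \<le> real n"
proof -
  have "(\<Sum>j<k. \<Sum>i<j. Ind a b j k) \<le> real n * (if k = b then 1 else 0)" if k: "k < n" for k
  proof -
    have "(\<Sum>j<k. \<Sum>i<j. Ind a b j k) \<le> (\<Sum>j<k. real n * Ind a b j k)"
    proof (intro sum_mono)
      fix j assume "j \<in> {..<k}"
      hence "real j \<le> real n" using k by simp
      thus "(\<Sum>i<j. Ind a b j k) \<le> real n * Ind a b j k"
        by (simp add: Ind_def)
    qed
    also have "\<dots> = real n * (\<Sum>j<k. Ind a b j k)" by (simp add: sum_distrib_left)
    also have "(\<Sum>j<k. Ind a b j k) \<le> (if k = b then 1 else 0)"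
      using delta_le1[of "{..<k}" a] by (auto simp: Ind_def)
    hence "real n * (\<Sum>j<k. Ind a b j k) \<le> real n * (if k = b then 1 else 0)"
      by (intro mult_left_mono) auto
    finally show ?thesis .
  qed
  hence "(\<Sum>k<n. \<Sum>j<k. \<Sum>i<j. Ind a b j k) \<le> (\<Sum>k<n. real n * (if k = b then 1 else 0))"
    by (intro sum_mono) auto
  also have "\<dots> = real n * (\<Sum>k<n. if k = b then 1 else 0)" by (rule sum_distrib_left[symmetric])
  also have "\<dots> \<le> real n * 1" by (intro mult_left_mono delta_le1) auto
  finally show ?thesis by simp
qed

lemma gw_diff:
  assumes "u < v"
  shows "\<bar>graph_weight (E((a,b):=True)) u v - graph_weight (E((a,b):=False)) u v\<bar> \<le> Ind a b u v"
  using assms unfolding graph_weight_def Ind_def by auto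

lemma BC_bd:
  "\<bar>BC n (graph_weight (E((a,b):=True))) - BC n (graph_weight (E((a,b):=False)))\<bar> \<le> 3 * real n"
proof -
  define w1 where "w1 = graph_weight (E((a,b):=True))"
  define w0 where "w0 = graph_weight (E((a,b):=False))"
  have "\<bar>BC n w1 - BC n w0\<bar> \<le> (\<Sum>k<n. \<Sum>j<k. \<Sum>i<j. Ind a b i j + Ind a b i k + Ind a b j k)"
  proof -
    have eq: "BC n w1 - BC n w0 = (\<Sum>k<n. \<Sum>j<k. \<Sum>i<j.
        min (w1 i j + w1 i k) (min (w1 i j + w1 j k) (w1 i k + w1 j k)) - min (w0 i j + w0 i k) (min (w0 i j + w0 j k) (w0 i k + w0 j k)))"
      unfolding BC_def by (simp only: sum_subtractf)
    have "\<bar>BC n w1 - BC n w0\<bar> \<le> (\<Sum>k<n. \<Sum>j<k. \<Sum>i<j. \<bar>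
        min (w1 i j + w1 i k) (min (w1 i j + w1 j k) (w1 i k + w1 j k)) - min (w0 i j + w0 i k) (min (w0 i j + w0 j k) (w0 i k + w0 j k))\<bar>)"
      unfolding eq
      apply (rule order_trans[OF sum_abs])
      apply (rule sum_mono)
      unfolding eq
      apply (rule order_trans[OF sum_abs])
      apply (rule sum_mono)
      apply (rule sum_abs)
      done
    also have "\<dots> \<le> (\<Sum>k<n. \<Sum>j<k. \<Sum>i<j. Ind a b i j + Ind a b i k + Ind a b j k)"
    proof (rule sum_mono, rule sum_mono, rule sum_mono)
      fix k j i assume "k \<in> {..<n}" "j \<in> {..<k}" "i \<in> {..<j}"
      hence ij: "i < j" "i < k" "j < k" by auto
      show "\<bar>min (w1 i j + w1 i k) (min (w1 i j + w1 j k) (w1 i k + w1 j k)) - min (w0 i j + w0 i k) (min (w0 i j + w0 j k) (w0 i k + w0 j k))\<bar>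
           \<le> Ind a b i j + Ind a b i k + Ind a b j k"
      proof -
        have d1: "\<bar>w1 i j - w0 i j\<bar> \<le> Ind a b i j" unfolding w1_def w0_def by (rule gw_diff[OF ij(1)])
        have d2: "\<bar>w1 i k - w0 i k\<bar> \<le> Ind a b i k" unfolding w1_def w0_def by (rule gw_diff[OF ij(2)])
        have d3: "\<bar>w1 j k - w0 j k\<bar> \<le> Ind a b j k" unfolding w1_def w0_def by (rule gw_diff[OF ij(3)])
        have m: "\<bar>min (w1 i j + w1 i k) (min (w1 i j + w1 j k) (w1 i k + w1 j k)) - min (w0 i j + w0 i k) (min (w0 i j + w0 j k) (w0 i k + w0 j k))\<bar>
           \<le> \<bar>w1 i j - w0 i j\<bar> + \<bar>w1 i k - w0 i k\<bar> + \<bar>w1 j k - w0 j k\<bar>"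
          by (rule min3_lip)
        have "\<bar>w1 i j - w0 i j\<bar> + \<bar>w1 i k - w0 i k\<bar> + \<bar>w1 j k - w0 j k\<bar> \<le> Ind a b i j + Ind a b i k + Ind a b j k"
          using d1 d2 d3 by (intro add_mono)
        with m show ?thesis by (rule order_trans)
      qed
    qed
    finally show ?thesis .
  qed
  also have "\<dots> = (\<Sum>k<n. \<Sum>j<k. \<Sum>i<j. Ind a b i j) + (\<Sum>k<n. \<Sum>j<k. \<Sum>i<j. Ind a b i k) + (\<Sum>k<n. \<Sum>j<k. \<Sum>i<j. Ind a b j k)"
    by (simp only: sum.distrib)
  also have "\<dots> \<le> 3 * real n" using C1[of a b n] C2[of a b n] C3[of a b n] by linarith
  finally show ?thesis unfolding w1_def w0_def .
qed

lemma BC_tail: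
  assumes t: "t > 0" and n: "n > 0"
  shows "measure_pmf.prob (random_graph n P)
     {E. \<bar>BC n (graph_weight E) - measure_pmf.expectation (random_graph n P) (\<lambda>E. BC n (graph_weight E))\<bar> \<ge> t}
     \<le> 2 * exp (-2 * t\<^sup>2 / (9 * real n ^ 4))"
proof -
  define M where "M = random_graph n P"
  define f where "f = (\<lambda>E. BC n (graph_weight E))"
  have bd: "\<forall>E z. z \<in> Aset n \<longrightarrow> \<bar>f (E(z:=True)) - f (E(z:=False))\<bar> \<le> 3 * real n"
  proof (intro allI impI)
    fix E :: "nat \<times> nat \<Rightarrow> bool" and z :: "nat \<times> nat"
    obtain a b where z: "z = (a,b)" by (cases z)
    show "\<bar>f (E(z:=True)) - f (E(z:=False))\<bar> \<le> 3 * real n"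
      unfolding f_def z by (rule BC_bd)
  qed
  have S: "(\<Sum>z\<in>Aset n. (3 * real n)\<^sup>2) \<le> 9 * real n ^ 4"
  proof -
    have "(\<Sum>z\<in>Aset n. (3 * real n)\<^sup>2) = real (card (Aset n)) * (9 * (real n)\<^sup>2)"
      by (simp add: power_mult_distrib)
    also have "\<dots> \<le> (real n)\<^sup>2 * (9 * (real n)\<^sup>2)"
      by (intro mult_right_mono card_Aset) simp
    also have "\<dots> = 9 * real n ^ 4" by (simp add: power2_eq_square power4_eq_xxxx)
    finally show ?thesis .
  qed
  have Sp: "9 * real n ^ 4 > 0" using n by simp
  have up: "measure_pmf.prob M {E. f E - measure_pmf.expectation M f \<ge> t} \<le> exp (-2 * t\<^sup>2 / (9 * real n ^ 4))"
    unfolding M_def rg_def by (rule mcd_tail[OF finite_Aset bd t Sp S])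
  have lo: "measure_pmf.prob M {E. measure_pmf.expectation M f - f E \<ge> t} \<le> exp (-2 * t\<^sup>2 / (9 * real n ^ 4))"
    unfolding M_def rg_def by (rule mcd_tail_lower[OF finite_Aset bd t Sp S])
  have "{E. \<bar>f E - measure_pmf.expectation M f\<bar> \<ge> t} =
      {E. f E - measure_pmf.expectation M f \<ge> t} \<union> {E. measure_pmf.expectation M f - f E \<ge> t}"
    by auto
  hence "measure_pmf.prob M {E. \<bar>f E - measure_pmf.expectation M f\<bar> \<ge> t}
      \<le> measure_pmf.prob M {E. f E - measure_pmf.expectation M f \<ge> t} + measure_pmf.prob M {E. measure_pmf.expectation M f - f E \<ge> t}"
    by (simp only:) (intro measure_Un_le, auto)
  also have "\<dots> \<le> 2 * exp (-2 * t\<^sup>2 / (9 * real n ^ 4))" using up lo by simp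
  finally show ?thesis unfolding M_def f_def .
qed

lemma gw01: "graph_weight E i j = 0 \<or> graph_weight E i j = 1"
  unfolding graph_weight_def by auto

lemma min_ge_prod:
  fixes x y z :: real
  assumes "x = 0 \<or> x = 1" "y = 0 \<or> y = 1" "z = 0 \<or> z = 1"
  shows "x * y \<le> min (x + y) (min (x + z) (y + z))"
  using assms by auto

lemma EBC_lower:
  assumes P: "\<And>i j. i < n \<Longrightarrow> j < n \<Longrightarrow> 0 \<le> P i j \<and> P i j \<le> 1"
    and pm: "0 \<le> pm" "\<And>i j. i < n \<Longrightarrow> j < n \<Longrightarrow> i \<noteq> j \<Longrightarrow> pm \<le> P i j"
  shows "pm\<^sup>2 * (real n * (real n - 1) * (real n - 2) / 6)
     \<le> measure_pmf.expectation (random_graph n P) (\<lambda>E. BC n (graph_weight E))"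
proof -
  define M where "M = random_graph n P"
  have intM: "integrable (measure_pmf M) (f :: _ \<Rightarrow> real)" for f
    unfolding M_def rg_def by simp
  have "pm\<^sup>2 * (real n * (real n - 1) * (real n - 2) / 6) = (\<Sum>k<n. \<Sum>j<k. \<Sum>i<j. pm\<^sup>2)"
    by (simp only: N3[symmetric] sum_distrib_left mult_1_right)
  also have "\<dots> \<le> (\<Sum>k<n. \<Sum>j<k. \<Sum>i<j. P i j * P i k)"
  proof (rule sum_mono, rule sum_mono, rule sum_mono)
    fix k j i assume "k \<in> {..<n}" "j \<in> {..<k}" "i \<in> {..<j}"
    hence "i < n" "j < n" "k < n" "i \<noteq> j" "i \<noteq> k" by auto
    hence "pm \<le> P i j" "pm \<le> P i k" using pm by auto
    thus "pm\<^sup>2 \<le> P i j * P i k" unfolding power2_eq_square using pm(1) by (intro mult_mono) auto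
  qed
  also have "\<dots> = (\<Sum>k<n. \<Sum>j<k. \<Sum>i<j. measure_pmf.expectation M (\<lambda>E. graph_weight E i j * graph_weight E i k))"
  proof (rule sum.cong[OF refl], rule sum.cong[OF refl], rule sum.cong[OF refl])
    fix k j i assume "k \<in> {..<n}" "j \<in> {..<k}" "i \<in> {..<j}"
    hence z: "(i,j) \<in> Aset n" "(i,k) \<in> Aset n" "(i,j) \<noteq> (i,k)" unfolding Aset_def by auto
    have "measure_pmf.expectation M (\<lambda>E. graph_weight E i j * graph_weight E i k)
        = measure_pmf.expectation M (\<lambda>E. (if E (i,j) then 1 else 0) * (if E (i,k) then 1 else 0))"
      using gw_Aset[OF z(1)] gw_Aset[OF z(2)] by simp
    also have "\<dots> = P i j * P i k"
      unfolding M_def using exp_coord2[OF z P] by simp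
    finally show "P i j * P i k = measure_pmf.expectation M (\<lambda>E. graph_weight E i j * graph_weight E i k)" by simp
  qed
  also have "\<dots> = measure_pmf.expectation M (\<lambda>E. \<Sum>k<n. \<Sum>j<k. \<Sum>i<j. graph_weight E i j * graph_weight E i k)"
    by (simp add: Bochner_Integration.integral_sum intM)
  also have "\<dots> \<le> measure_pmf.expectation M (\<lambda>E. BC n (graph_weight E))"
    unfolding BC_def
    by (intro integral_mono intM sum_mono min_ge_prod gw01)
  finally show ?thesis unfolding M_def .
qed

lemma ratio_lower:
  fixes L B a b :: real
  assumes "0 < L" "0 < B" "0 \<le> a" "a \<le> 1" "0 \<le> b" "b < 1"
  shows "(1 - (a + b) / (1 - b)) * (L / B) \<le> (L * (1 - a)) / (B * (1 + b))"
proof -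
  have "1 - (a + b) / (1 - b) \<le> (1 - a) / (1 + b)"
  proof -
    have "(a + b) / (1 + b) \<le> (a + b) / (1 - b)"
      using assms by (intro divide_left_mono) auto
    moreover have "(1 - a) / (1 + b) = 1 - (a + b) / (1 + b)"
      using assms by (simp add: field_simps)
    ultimately show ?thesis by linarith
  qed
  hence "(1 - (a + b) / (1 - b)) * (L / B) \<le> (1 - a) / (1 + b) * (L / B)"
    using assms by (intro mult_right_mono) auto
  also have "\<dots> = (L * (1 - a)) / (B * (1 + b))" by (simp add: field_simps)
  finally show ?thesis .
qed

lemma ratio_upper:
  fixes L B a b :: real
  assumes "0 < L" "0 < B" "0 \<le> a" "0 \<le> b" "b < 1"
  shows "(L * (1 + a)) / (B * (1 - b)) = (1 + (a + b) / (1 - b)) * (L / B)"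
  using assms by (simp add: field_simps)

lemma main_det:
  fixes W P :: "nat \<Rightarrow> nat \<Rightarrow> real"
  assumes Tb: "is_hctree n Tb"
    and optT: "\<And>T. is_hctree n T \<Longrightarrow> TC n P Tb \<le> TC n P T"
    and L: "0 < TC n P Tb" and B: "0 < B"
    and hY: "\<And>T. is_hctree n T \<Longrightarrow> \<bar>TC n W T - TC n P T\<bar> \<le> D1"
    and hB: "\<bar>BC n W - B\<bar> \<le> D2"
    and a: "0 \<le> D1 / TC n P Tb" "D1 / TC n P Tb \<le> 1"
    and b: "0 \<le> D2 / B" "D2 / B < 1"
  shows "ereal ((1 - (D1 / TC n P Tb + D2 / B) / (1 - D2 / B)) * (TC n P Tb / B)) \<le> rho_star n W \<and>
         rho_star n W \<le> ereal ((1 + (D1 / TC n P Tb + D2 / B) / (1 - D2 / B)) * (TC n P Tb / B))"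
proof -
  define L where "L = TC n P Tb"
  define a where "a = D1 / L"
  define b where "b = D2 / B"
  have D1: "D1 = L * a" unfolding a_def using L L_def by simp
  have D2: "D2 = B * b" unfolding b_def using B by simp
  have a0: "0 \<le> a" "a \<le> 1" using a unfolding a_def L_def by auto
  have b0: "0 \<le> b" "b < 1" using b unfolding b_def by auto
  have Lp: "0 < L" using L unfolding L_def .
  have BCl: "B * (1 - b) \<le> BC n W" and BCu: "BC n W \<le> B * (1 + b)"
    using hB unfolding D2 by (auto simp: algebra_simps abs_le_iff)
  have BCp: "0 < B * (1 - b)" using B b0 by simp
  hence BCpos: "BC n W > 0" using BCl by linarith
  have rho_eq: "rho n W T = ereal (TC n W T / BC n W)" for T
    unfolding rho_def using BCpos by simp
  have lower: "ereal ((1 - (a + b) / (1 - b)) * (L / B)) \<le> rho_star n W"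
    unfolding rho_star_def
  proof (rule INF_greatest)
    fix T assume "T \<in> {T. is_hctree n T}"
    hence T: "is_hctree n T" by simp
    have "TC n P T \<ge> L" using optT[OF T] unfolding L_def .
    moreover have "TC n W T \<ge> TC n P T - L * a" using hY[OF T] unfolding D1 by (auto simp: abs_le_iff)
    ultimately have num: "TC n W T \<ge> L * (1 - a)" by (simp add: algebra_simps)
    have nn: "0 \<le> L * (1 - a)" using Lp a0 by simp
    have "(1 - (a + b) / (1 - b)) * (L / B) \<le> (L * (1 - a)) / (B * (1 + b))"
      by (rule ratio_lower[OF Lp B a0 b0])
    also have "\<dots> \<le> (L * (1 - a)) / BC n W"
      using BCpos BCu nn by (intro divide_left_mono) auto
    also have "\<dots> \<le> TC n W T / BC n W"
      using BCpos num by (intro divide_right_mono) auto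
    finally show "ereal ((1 - (a + b) / (1 - b)) * (L / B)) \<le> rho n W T"
      unfolding rho_eq by simp
  qed
  have upper: "rho_star n W \<le> ereal ((1 + (a + b) / (1 - b)) * (L / B))"
  proof -
    have r1: "rho_star n W \<le> rho n W Tb"
      unfolding rho_star_def using Tb by (intro INF_lower) simp
    have "TC n W Tb \<le> L * (1 + a)" using hY[OF Tb] unfolding D1 L_def by (auto simp: abs_le_iff algebra_simps)
    hence "TC n W Tb / BC n W \<le> (L * (1 + a)) / BC n W"
      using BCpos by (intro divide_right_mono) auto
    also have "\<dots> \<le> (L * (1 + a)) / (B * (1 - b))"
      using BCp BCl Lp a0 by (intro divide_left_mono) auto
    also have "\<dots> = (1 + (a + b) / (1 - b)) * (L / B)"
      by (rule ratio_upper[OF Lp B a0(1) b0])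
    finally have "TC n W Tb / BC n W \<le> (1 + (a + b) / (1 - b)) * (L / B)" .
    hence "rho n W Tb \<le> ereal ((1 + (a + b) / (1 - b)) * (L / B))"
      unfolding rho_eq by simp
    with r1 show ?thesis by (rule order_trans)
  qed
  show ?thesis using lower upper unfolding a_def b_def L_def by (rule conjI)
qed

lemma ln_ge1: "3 \<le> n \<Longrightarrow> 1 \<le> ln (real n)"
proof -
  assume n: "3 \<le> n"
  have "exp 1 \<le> real n" using exp_le n by linarith
  thus ?thesis using n by (subst ln_ge_iff) auto
qed

lemma exp_m2ln: "0 < (x::real) \<Longrightarrow> exp (-2 * ln x) = 1 / x\<^sup>2"
proof -
  assume x: "0 < x"
  have "exp (-2 * ln x) = inverse (exp (ln x + ln x))" by (simp add: exp_minus)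
  also have "exp (ln x + ln x) = x * x" using x by (simp only: exp_add exp_ln)
  hence "inverse (exp (ln x + ln x)) = 1 / x\<^sup>2" by (simp add: power2_eq_square divide_inverse)
  finally show ?thesis .
qed

lemma bad1_prob:
  fixes P :: "nat \<Rightarrow> nat \<Rightarrow> real"
  assumes P: "\<And>i j. i < n \<Longrightarrow> j < n \<Longrightarrow> 0 \<le> P i j \<and> P i j \<le> 1" and n: "3 \<le> n"
  shows "measure_pmf.prob (random_graph n P)
     {E. \<exists>m\<in>{..<n}. \<exists>g\<in>{..<n} \<rightarrow>\<^sub>E {..<n}.
          \<bar>Yw n m g (graph_weight E) - Yw n m g P\<bar> \<ge> real n * sqrt (real n * ln (real n))}
     \<le> 2 / (real n)\<^sup>2"
proof -
  define t1 where "t1 = real n * sqrt (real n * ln (real n))"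
  define I where "I = {..<n} \<times> ({..<n} \<rightarrow>\<^sub>E {..<n})"
  define X where "X = (\<lambda>mg. {E. \<bar>Yw n (fst mg) (snd mg) (graph_weight E) - Yw n (fst mg) (snd mg) P\<bar> \<ge> t1})"
  have lnp: "0 < ln (real n)" using n by simp
  have t1p: "t1 > 0" unfolding t1_def using n lnp by simp
  have t1sq: "t1\<^sup>2 = (real n)\<^sup>2 * (real n * ln (real n))"
    unfolding t1_def using lnp by (simp add: power_mult_distrib)
  have np: "0 < n" using n by simp
  have finI: "finite I" unfolding I_def by (auto intro!: finite_PiE)
  have cardI: "real (card I) = real n * real n ^ n"
    unfolding I_def by (simp add: card_cartesian_product card_PiE)
  have set_eq: "{E. \<exists>m\<in>{..<n}. \<exists>g\<in>{..<n} \<rightarrow>\<^sub>E {..<n}.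
          \<bar>Yw n m g (graph_weight E) - Yw n m g P\<bar> \<ge> real n * sqrt (real n * ln (real n))} = (\<Union>mg\<in>I. X mg)"
    unfolding I_def X_def t1_def by (auto; meson lessThan_iff)
  have "measure_pmf.prob (random_graph n P) (\<Union>mg\<in>I. X mg) \<le> (\<Sum>mg\<in>I. measure_pmf.prob (random_graph n P) (X mg))"
    by (rule measure_pmf.finite_measure_subadditive_finite[OF finI]) auto
  also have "\<dots> \<le> (\<Sum>mg\<in>I. 2 * exp (-2 * t1\<^sup>2 / (real n)\<^sup>2))"
    unfolding X_def by (intro sum_mono Yw_tail[OF P t1p np]) auto
  also have "\<dots> = real n * real n ^ n * (2 * exp (-2 * (real n * ln (real n))))"
    using np by (simp add: cardI t1sq)
  also have "\<dots> \<le> 2 / (real n)\<^sup>2"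
  proof -
    have e: "real n ^ k = exp (real k * ln (real n))" for k
      using np by (simp add: exp_of_nat_mult)
    have "real n * real n ^ n * (2 * exp (-2 * (real n * ln (real n)))) * (real n)\<^sup>2
        = 2 * (real n ^ (n + 3) * exp (-2 * (real n * ln (real n))))"
      by (simp add: power_add power2_eq_square algebra_simps power3_eq_cube)
    also have "\<dots> = 2 * exp ((3 - real n) * ln (real n))"
      unfolding e by (simp add: algebra_simps flip: exp_add)
    also have "\<dots> \<le> 2 * exp 0"
      using n lnp by (intro mult_left_mono exp_mono) (auto simp: mult_nonpos_nonneg)
    finally have "real n * real n ^ n * (2 * exp (-2 * (real n * ln (real n)))) * (real n)\<^sup>2 \<le> 2" by simp
    thus ?thesis using np by (simp add: field_simps)
  qed
  finally show ?thesis unfolding set_eq .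
qed

lemma bad2_prob:
  fixes P :: "nat \<Rightarrow> nat \<Rightarrow> real"
  assumes n: "3 \<le> n"
  shows "measure_pmf.prob (random_graph n P)
     {E. \<bar>BC n (graph_weight E) - measure_pmf.expectation (random_graph n P) (\<lambda>E. BC n (graph_weight E))\<bar>
          \<ge> 3 * (real n)\<^sup>2 * ln (real n)}
     \<le> 2 / (real n)\<^sup>2"
proof -
  have lnp: "1 \<le> ln (real n)" by (rule ln_ge1[OF n])
  have np: "0 < n" using n by simp
  have np1: "1 < real n" using n by simp
  have tp: "3 * (real n)\<^sup>2 * ln (real n) > 0" using np1 lnp by (intro mult_pos_pos) auto
  have "measure_pmf.prob (random_graph n P)
     {E. \<bar>BC n (graph_weight E) - measure_pmf.expectation (random_graph n P) (\<lambda>E. BC n (graph_weight E))\<bar>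
          \<ge> 3 * (real n)\<^sup>2 * ln (real n)} \<le> 2 * exp (-2 * (3 * (real n)\<^sup>2 * ln (real n))\<^sup>2 / (9 * real n ^ 4))"
    by (rule BC_tail[OF tp np])
  also have "-2 * (3 * (real n)\<^sup>2 * ln (real n))\<^sup>2 / (9 * real n ^ 4) = -2 * (ln (real n) * ln (real n))"
    using np by (simp add: power2_eq_square power4_eq_xxxx field_simps)
  also have "2 * exp (-2 * (ln (real n) * ln (real n))) \<le> 2 * exp (-2 * ln (real n))"
  proof -
    have "ln (real n) * 1 \<le> ln (real n) * ln (real n)" using lnp by (intro mult_left_mono) auto
    thus ?thesis by simp
  qed
  also have "\<dots> = 2 / (real n)\<^sup>2" using exp_m2ln[of "real n"] np by simp
  finally show ?thesis .
qed

definition qq :: "nat \<Rightarrow> real" where "qq n = sqrt (ln (real n) / real n)"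

lemma qq_pos: "2 \<le> n \<Longrightarrow> 0 < qq n"
  unfolding qq_def by simp

lemma sq_nln: "2 \<le> n \<Longrightarrow> sqrt (real n * ln (real n)) = real n * qq n"
proof -
  assume n: "2 \<le> n"
  have "real n * ln (real n) = (real n)\<^sup>2 * (ln (real n) / real n)"
    using n by (simp add: power2_eq_square)
  hence "sqrt (real n * ln (real n)) = sqrt ((real n)\<^sup>2) * sqrt (ln (real n) / real n)"
    by (simp only: real_sqrt_mult)
  thus ?thesis unfolding qq_def by simp
qed

lemma n_quad: "6 \<le> n \<Longrightarrow> (real n)\<^sup>2 \<le> 2 * ((real n - 1) * (real n - 2))"
proof -
  assume "6 \<le> n"
  hence x: "6 \<le> real n" by simp
  have "0 \<le> (real n - 6) * real n + 4" using x by simp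
  thus ?thesis by (simp add: power2_eq_square algebra_simps)
qed

lemma N3_pos: "3 \<le> n \<Longrightarrow> 0 < real n * (real n - 1) * (real n - 2) / 6"
proof -
  assume "3 \<le> n" hence "3 \<le> real n" by simp
  thus ?thesis by simp
qed

lemma alpha_le:
  assumes n: "6 \<le> n" and C: "0 < C"
    and L: "2 * (C * qq n) * (real n * (real n - 1) * (real n - 2) / 6) \<le> L"
  shows "0 < L" "real n * (real n * sqrt (real n * ln (real n))) / L \<le> 6 / C"
proof -
  have q: "0 < qq n" using n by (intro qq_pos) simp
  have N: "0 < real n * (real n - 1) * (real n - 2) / 6" using n by (intro N3_pos) simp
  have lp: "0 < 2 * (C * qq n) * (real n * (real n - 1) * (real n - 2) / 6)"
    using q N C by (intro mult_pos_pos) auto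
  thus "0 < L" using L by linarith
  have e: "real n * (real n * sqrt (real n * ln (real n))) = real n * (real n)\<^sup>2 * qq n"
    using n by (simp add: sq_nln power2_eq_square)
  have "real n * (real n)\<^sup>2 * qq n \<le> real n * (2 * ((real n - 1) * (real n - 2))) * qq n"
    using n_quad[OF n] q by (intro mult_right_mono mult_left_mono) auto
  also have "\<dots> = 6 / C * (2 * (C * qq n) * (real n * (real n - 1) * (real n - 2) / 6))"
    using C by (simp add: field_simps)
  also have "\<dots> \<le> 6 / C * L"
    using C L by (intro mult_left_mono) auto
  finally have "real n * (real n * sqrt (real n * ln (real n))) \<le> 6 / C * L" unfolding e .
  thus "real n * (real n * sqrt (real n * ln (real n))) / L \<le> 6 / C"
    using \<open>0 < L\<close> by (simp add: divide_le_eq)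
qed

lemma beta_le:
  assumes n: "6 \<le> n" and C: "1 \<le> C"
    and B: "(C * qq n)\<^sup>2 * (real n * (real n - 1) * (real n - 2) / 6) \<le> B"
  shows "0 < B" "3 * (real n)\<^sup>2 * ln (real n) / B \<le> 36 / C"
proof -
  have q: "0 < qq n" using n by (intro qq_pos) simp
  have N: "0 < real n * (real n - 1) * (real n - 2) / 6" using n by (intro N3_pos) simp
  have lp: "0 < (C * qq n)\<^sup>2 * (real n * (real n - 1) * (real n - 2) / 6)"
    using q N C by simp
  thus "0 < B" using B by linarith
  have ln0: "0 < ln (real n)" using n by simp
  have q2: "(qq n)\<^sup>2 = ln (real n) / real n" unfolding qq_def using ln0 by simp
  have n0: "0 < real n" using n by simp
  have "3 * (real n)\<^sup>2 * ln (real n) \<le> 3 * (2 * ((real n - 1) * (real n - 2))) * ln (real n)"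
    using n_quad[OF n] ln0 by (intro mult_right_mono mult_left_mono) auto
  also have "\<dots> \<le> 3 * (2 * ((real n - 1) * (real n - 2))) * ln (real n) * C"
  proof -
    have "0 \<le> 3 * (2 * ((real n - 1) * (real n - 2))) * ln (real n)"
      using ln0 n by (intro mult_nonneg_nonneg) auto
    thus ?thesis using C by (metis mult.right_neutral mult_left_mono)
  qed
  also have "\<dots> = 36 / C * ((C * qq n)\<^sup>2 * (real n * (real n - 1) * (real n - 2) / 6))"
  proof -
    have cq: "(C * qq n)\<^sup>2 = C\<^sup>2 * (ln (real n) / real n)" by (simp add: power_mult_distrib q2)
    show ?thesis unfolding cq using C n0 by (simp add: field_simps power2_eq_square)
  qed
  also have "\<dots> \<le> 36 / C * B"
    using C B by (intro mult_left_mono) auto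
  finally have "3 * (real n)\<^sup>2 * ln (real n) \<le> 36 / C * B" .
  thus "3 * (real n)\<^sup>2 * ln (real n) / B \<le> 36 / C"
    using \<open>0 < B\<close> by (simp add: divide_le_eq)
qed

lemma opt_TC:
  assumes o: "optimal_hctree n w Tb" and bc: "BC n w > 0" and T: "is_hctree n T"
  shows "TC n w Tb \<le> TC n w T"
proof -
  have "rho n w Tb \<le> rho n w T" using o T unfolding optimal_hctree_def by blast
  hence "TC n w Tb / BC n w \<le> TC n w T / BC n w" unfolding rho_def using bc by simp
  thus ?thesis using bc by (simp add: divide_le_cancel)
qed

lemma TC_dev:
  assumes T: "is_hctree n T"
    and Y: "\<And>m g. m < n \<Longrightarrow> g \<in> {..<n} \<rightarrow>\<^sub>E {..<n} \<Longrightarrow> \<bar>Yw n m g W - Yw n m g P\<bar> \<le> t"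
  shows "\<bar>TC n W T - TC n P T\<bar> \<le> real n * t"
proof -
  have "TC n W T - TC n P T = (\<Sum>m<n. Yw n m (lab T n m) W - Yw n m (lab T n m) P)"
    unfolding TC_decomp[OF T] by (simp add: sum_subtractf)
  hence "\<bar>TC n W T - TC n P T\<bar> \<le> (\<Sum>m<n. \<bar>Yw n m (lab T n m) W - Yw n m (lab T n m) P\<bar>)"
    by (simp add: sum_abs)
  also have "\<dots> \<le> (\<Sum>m<n. t)"
    by (intro sum_mono Y lab_PiE[OF T]) auto
  finally show ?thesis by simp
qed

theorem theorem8:
  fixes P :: "nat \<Rightarrow> nat \<Rightarrow> nat \<Rightarrow> real"
    and Tbar :: "nat \<Rightarrow> hctree"
  assumes symm: "\<And>n i j. i < n \<Longrightarrow> j < n \<Longrightarrow> P n i j = P n j i"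
    and range: "\<And>n i j. i < n \<Longrightarrow> j < n \<Longrightarrow> 0 \<le> P n i j \<and> P n i j \<le> 1"
    and dense: "\<And>C. C > 0 \<Longrightarrow> eventually (\<lambda>n. \<forall>i<n. \<forall>j<n. i \<noteq> j \<longrightarrow>
                   C * sqrt (ln (real n) / real n) \<le> P n i j) sequentially"
    and opt: "eventually (\<lambda>n. optimal_hctree n (P n) (Tbar n)) sequentially"
  shows "\<exists>\<epsilon>>0. \<exists>\<delta>::nat \<Rightarrow> real. \<delta> \<longlonglongrightarrow> 0 \<and>
     eventually (\<lambda>n.
       let R = TC n (P n) (Tbar n) /
               measure_pmf.expectation (random_graph n (P n)) (\<lambda>E. BC n (graph_weight E))
       in measure_pmf.prob (random_graph n (P n))
            {E. ereal ((1 - \<delta> n) * R) \<le> rho_star n (graph_weight E) \<and>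
                rho_star n (graph_weight E) \<le> ereal ((1 + \<delta> n) * R)}
          > 1 - real n powr (-\<epsilon>)) sequentially"
proof -
  define L where "L n = TC n (P n) (Tbar n)" for n
  define B where "B n = measure_pmf.expectation (random_graph n (P n)) (\<lambda>E. BC n (graph_weight E))" for n
  define t1 where "t1 n = real n * sqrt (real n * ln (real n))" for n
  define t2 where "t2 n = 3 * (real n)\<^sup>2 * ln (real n)" for n
  define al where "al n = real n * t1 n / L n" for n
  define be where "be n = t2 n / B n" for n
  define de where "de n = (al n + be n) / (1 - be n)" for n
  have K: "eventually (\<lambda>n. 6 \<le> n \<and> 0 \<le> al n \<and> al n \<le> 6 / C \<and> 0 \<le> be n \<and> be n \<le> 36 / C
      \<and> 0 < L n \<and> 0 < B n \<and> (\<forall>i<n. \<forall>j<n. i \<noteq> j \<longrightarrow> C * qq n \<le> P n i j)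
      \<and> optimal_hctree n (P n) (Tbar n)) sequentially" if C: "1 \<le> C" for C
  proof -
    have "eventually (\<lambda>n. \<forall>i<n. \<forall>j<n. i \<noteq> j \<longrightarrow> C * qq n \<le> P n i j) sequentially"
      using dense[of C] C unfolding qq_def by simp
    moreover have "eventually (\<lambda>n. 6 \<le> n) sequentially" by (rule eventually_ge_at_top)
    ultimately show ?thesis using opt
    proof eventually_elim
      case (elim n)
      hence n: "6 \<le> n" and dn: "\<forall>i<n. \<forall>j<n. i \<noteq> j \<longrightarrow> C * qq n \<le> P n i j"
        and on: "optimal_hctree n (P n) (Tbar n)" by auto
      have qp: "0 < qq n" using n by (intro qq_pos) simp
      have w: "\<And>i j. i < n \<Longrightarrow> j < n \<Longrightarrow> i \<noteq> j \<Longrightarrow> 0 \<le> P n i j \<and> C * qq n \<le> P n i j"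
        using dn range by auto
      have Lb: "2 * (C * qq n) * (real n * (real n - 1) * (real n - 2) / 6) \<le> L n"
        unfolding L_def by (rule TC_lower[OF w])
      have C0: "0 < C" using C by simp
      note A = alpha_le[OF n C0 Lb]
      have Bb: "(C * qq n)\<^sup>2 * (real n * (real n - 1) * (real n - 2) / 6) \<le> B n"
        unfolding B_def by (rule EBC_lower) (use range w qp C0 in auto)
      note Bt = beta_le[OF n C Bb]
      have t1n: "0 \<le> t1 n" unfolding t1_def using n by simp
      have t2n: "0 \<le> t2 n" unfolding t2_def using n by simp
      show ?case
        using n A Bt dn on t1n t2n unfolding al_def be_def t1_def[symmetric] t2_def[symmetric]
        by (auto intro!: divide_nonneg_pos mult_nonneg_nonneg)
    qed
  qed
  have al0: "al \<longlonglongrightarrow> 0"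
  proof (rule tendstoI)
    fix e :: real assume e: "0 < e"
    define C where "C = 6 / e + 1"
    have C1: "1 \<le> C" unfolding C_def using e by simp
    have lt: "6 / C < e"
    proof -
      have "6 < e * C" unfolding C_def using e by (simp add: field_simps)
      thus ?thesis using C1 by (simp add: divide_less_eq mult.commute)
    qed
    show "eventually (\<lambda>n. dist (al n) 0 < e) sequentially"
      using K[OF C1] by eventually_elim (use lt in auto)
  qed
  have be0: "be \<longlonglongrightarrow> 0"
  proof (rule tendstoI)
    fix e :: real assume e: "0 < e"
    define C where "C = 36 / e + 1"
    have C1: "1 \<le> C" unfolding C_def using e by simp
    have lt: "36 / C < e"
    proof -
      have "36 < e * C" unfolding C_def using e by (simp add: field_simps)
      thus ?thesis using C1 by (simp add: divide_less_eq mult.commute)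
    qed
    show "eventually (\<lambda>n. dist (be n) 0 < e) sequentially"
      using K[OF C1] by eventually_elim (use lt in auto)
  qed
  have de0: "de \<longlonglongrightarrow> 0"
  proof -
    have "(\<lambda>n. (al n + be n) / (1 - be n)) \<longlonglongrightarrow> (0 + 0) / (1 - 0)"
      by (intro tendsto_intros al0 be0) simp
    thus ?thesis unfolding de_def by simp
  qed
  have "1 \<le> (100::real)" by simp
  have ev: "eventually (\<lambda>n.
       let R = TC n (P n) (Tbar n) /
               measure_pmf.expectation (random_graph n (P n)) (\<lambda>E. BC n (graph_weight E))
       in measure_pmf.prob (random_graph n (P n))
            {E. ereal ((1 - de n) * R) \<le> rho_star n (graph_weight E) \<and>
                rho_star n (graph_weight E) \<le> ereal ((1 + de n) * R)}
          > 1 - real n powr (-1)) sequentially"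
    using K[OF \<open>1 \<le> (100::real)\<close>]
  proof eventually_elim
    case (elim n)
    hence n: "6 \<le> n" and a: "0 \<le> al n" "al n \<le> 6 / 100" and b: "0 \<le> be n" "be n \<le> 36 / 100"
      and Lp: "0 < L n" and Bp: "0 < B n" and dn: "\<forall>i<n. \<forall>j<n. i \<noteq> j \<longrightarrow> 100 * qq n \<le> P n i j"
      and on: "optimal_hctree n (P n) (Tbar n)" by auto
    have n3: "3 \<le> n" using n by simp
    have qp: "0 < qq n" using n by (intro qq_pos) simp
    have w: "\<And>i j. i < n \<Longrightarrow> j < n \<Longrightarrow> i \<noteq> j \<Longrightarrow> 0 \<le> P n i j \<and> 100 * qq n \<le> P n i j"
      using dn range by auto
    have BCP: "0 < BC n (P n)"
    proof -
      have "2 * (100 * qq n) * (real n * (real n - 1) * (real n - 2) / 6) \<le> BC n (P n)"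
        by (rule BC_lower[OF w])
      moreover have "0 < 2 * (100 * qq n) * (real n * (real n - 1) * (real n - 2) / 6)"
        using qp N3_pos[OF n3] by (intro mult_pos_pos) auto
      ultimately show ?thesis by linarith
    qed
    have Tb: "is_hctree n (Tbar n)" using on unfolding optimal_hctree_def by simp
    have optT: "\<And>T. is_hctree n T \<Longrightarrow> TC n (P n) (Tbar n) \<le> TC n (P n) T"
      by (rule opt_TC[OF on BCP])
    define Bad1 where "Bad1 = {E. \<exists>m\<in>{..<n}. \<exists>g\<in>{..<n} \<rightarrow>\<^sub>E {..<n}.
          \<bar>Yw n m g (graph_weight E) - Yw n m g (P n)\<bar> \<ge> real n * sqrt (real n * ln (real n))}"
    define Bad2 where "Bad2 = {E. \<bar>BC n (graph_weight E) - measure_pmf.expectation (random_graph n (P n)) (\<lambda>E. BC n (graph_weight E))\<bar>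
          \<ge> 3 * (real n)\<^sup>2 * ln (real n)}"
    have pB1: "measure_pmf.prob (random_graph n (P n)) Bad1 \<le> 2 / (real n)\<^sup>2"
      unfolding Bad1_def by (rule bad1_prob[OF _ n3]) (use range in auto)
    have pB2: "measure_pmf.prob (random_graph n (P n)) Bad2 \<le> 2 / (real n)\<^sup>2"
      unfolding Bad2_def by (rule bad2_prob[OF n3])
    define Ev where "Ev = {E. ereal ((1 - de n) * (L n / B n)) \<le> rho_star n (graph_weight E) \<and>
                rho_star n (graph_weight E) \<le> ereal ((1 + de n) * (L n / B n))}"
    have sub: "UNIV - (Bad1 \<union> Bad2) \<subseteq> Ev"
    proof
      fix E assume E: "E \<in> UNIV - (Bad1 \<union> Bad2)"
      have hY: "\<bar>TC n (graph_weight E) T - TC n (P n) T\<bar> \<le> real n * t1 n" if T: "is_hctree n T" for T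
      proof (rule TC_dev[OF T])
        fix m g assume mg: "m < n" "g \<in> {..<n} \<rightarrow>\<^sub>E {..<n}"
        have "E \<notin> Bad1" using E by blast
        hence "\<not> (real n * sqrt (real n * ln (real n)) \<le> \<bar>Yw n m g (graph_weight E) - Yw n m g (P n)\<bar>)"
          using mg unfolding Bad1_def by blast
        thus "\<bar>Yw n m g (graph_weight E) - Yw n m g (P n)\<bar> \<le> t1 n"
          unfolding t1_def by linarith
      qed
      have aa: "0 \<le> real n * t1 n / TC n (P n) (Tbar n)" "real n * t1 n / TC n (P n) (Tbar n) \<le> 1"
        using a unfolding al_def L_def by linarith+
      have Lp': "0 < TC n (P n) (Tbar n)" using Lp unfolding L_def .
      have bb: "0 \<le> t2 n / B n" "t2 n / B n < 1" using b unfolding be_def by linarith+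
      have hB: "\<bar>BC n (graph_weight E) - B n\<bar> \<le> t2 n"
        using E unfolding Bad2_def B_def t2_def by auto
      have "ereal ((1 - (real n * t1 n / TC n (P n) (Tbar n) + t2 n / B n) / (1 - t2 n / B n)) * (TC n (P n) (Tbar n) / B n)) \<le> rho_star n (graph_weight E) \<and>
         rho_star n (graph_weight E) \<le> ereal ((1 + (real n * t1 n / TC n (P n) (Tbar n) + t2 n / B n) / (1 - t2 n / B n)) * (TC n (P n) (Tbar n) / B n))"
        using main_det[OF Tb optT Lp' Bp hY hB aa bb] by blast
      thus "E \<in> Ev" unfolding Ev_def de_def al_def be_def L_def by simp
    qed
    have "measure_pmf.prob (random_graph n (P n)) (Bad1 \<union> Bad2) \<le> 4 / (real n)\<^sup>2"
    proof -
      have "measure_pmf.prob (random_graph n (P n)) (Bad1 \<union> Bad2)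
          \<le> measure_pmf.prob (random_graph n (P n)) Bad1 + measure_pmf.prob (random_graph n (P n)) Bad2"
        by (intro measure_Un_le) auto
      thus ?thesis using pB1 pB2 by simp
    qed
    moreover have "1 - measure_pmf.prob (random_graph n (P n)) (Bad1 \<union> Bad2) \<le> measure_pmf.prob (random_graph n (P n)) Ev"
    proof -
      have "measure_pmf.prob (random_graph n (P n)) (UNIV - (Bad1 \<union> Bad2)) \<le> measure_pmf.prob (random_graph n (P n)) Ev"
        using sub by (intro measure_pmf.finite_measure_mono) auto
      moreover have "measure_pmf.prob (random_graph n (P n)) (UNIV - (Bad1 \<union> Bad2)) = 1 - measure_pmf.prob (random_graph n (P n)) (Bad1 \<union> Bad2)"
        using measure_pmf.prob_compl[of "Bad1 \<union> Bad2" "random_graph n (P n)"] by simp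
      ultimately show ?thesis by simp
    qed
    moreover have "4 / (real n)\<^sup>2 < 1 / real n"
    proof -
      have "4 * real n < (real n)\<^sup>2" using n by (simp add: power2_eq_square)
      thus ?thesis using n by (simp add: field_simps power2_eq_square)
    qed
    moreover have "real n powr (-1) = 1 / real n" using n by (simp add: powr_minus divide_inverse)
    ultimately have "measure_pmf.prob (random_graph n (P n)) Ev > 1 - real n powr (-1)" by simp
    thus ?case unfolding Ev_def L_def B_def Let_def by simp
  qed
  show ?thesis
    apply (rule exI[of _ "1::real"])
    apply (rule conjI)
     apply simp
    apply (rule exI[of _ de])
    apply (rule conjI[OF de0])
    apply (rule ev)
    done
qed

end
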